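(* Let $R$ be a right semihereditary ring such that $M_n(R)$ is a Baer ring for every $n\ge1$, let $M$ be a finitely generated right $R$-module and $K$ a submodule of $M$. (1) $M/\mathrm{cl}_{\mathbf B}(K)$ is finitely generated projective and $\mathrm{cl}_{\mathbf B}(K)$ is a direct summand of $M$. In particular $M=\mathbf B M\oplus \mathbf U M$, where $\mathbf BM$ is the bounded torsion submodule of $M$ and $\mathbf UM\cong M/\mathbf BM$ is finitely generated projective. (2) If moreover $R$ is right strongly semihereditary, then $\mathrm{cl}_{\mathbf T}(K)=\mathrm{cl}_{\mathbf B}(K)$ is a direct summand of $M$, and the torsion theories $(\mathbf B,\mathbf U)$ and $(\mathbf T,\mathbf P)$ coincide on the class of finitely generated modules. In particular every finitely generated right $R$-module is the direct sum of a finitely generated projective module and a singular module.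
   Context: $(\mathbf B,\mathbf U)$ is the torsion theory whose torsion class $\mathbf B$ consists of the right modules $M$ with $\mathrm{Hom}_R(M,R)=0$ (bounded modules); $\mathbf BM$ is the largest bounded submodule of $M$ and $\mathbf UM=M/\mathbf BM$. For a torsion theory with torsion class $\mathcal T$, $\mathrm{cl}_{\mathcal T}^M(K)=\pi^{-1}(\mathcal T(M/K))$ where $\pi:M\to M/K$. $(\mathbf T,\mathbf P)$ is the Goldie torsion theory (torsion-free class = nonsingular modules; for right nonsingular $R$ the torsion modules are the singular ones). A ring is Baer if every right annihilator is generated by an idempotent. $R$ is right strongly semihereditary if $R$ is right nonsingular and every finitely generated nonsingular right $R$-module is projective. *)

theory Defs
  imports "HOL-Algebra.Module" "HOL-Algebra.AbelCoset"
begin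

text \<open>Right modules over a (not necessarily commutative) ring R, encoded with the
  HOL-Algebra module record: the field smult M r x stands for the right action x r.\<close>

definition right_module :: "'a ring \<Rightarrow> ('a, 'm) module \<Rightarrow> bool" where
  "right_module R M \<longleftrightarrow> ring R \<and> abelian_group M \<and>
     (\<forall>r\<in>carrier R. \<forall>x\<in>carrier M. smult M r x \<in> carrier M) \<and>
     (\<forall>r\<in>carrier R. \<forall>s\<in>carrier R. \<forall>x\<in>carrier M.
        smult M (r \<oplus>\<^bsub>R\<^esub> s) x = smult M r x \<oplus>\<^bsub>M\<^esub> smult M s x) \<and>
     (\<forall>r\<in>carrier R. \<forall>x\<in>carrier M. \<forall>y\<in>carrier M.
        smult M r (x \<oplus>\<^bsub>M\<^esub> y) = smult M r x \<oplus>\<^bsub>M\<^esub> smult M r y) \<and>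
     (\<forall>r\<in>carrier R. \<forall>s\<in>carrier R. \<forall>x\<in>carrier M.
        smult M (r \<otimes>\<^bsub>R\<^esub> s) x = smult M s (smult M r x)) \<and>
     (\<forall>x\<in>carrier M. smult M \<one>\<^bsub>R\<^esub> x = x)"

definition submodule :: "'a ring \<Rightarrow> ('a, 'm) module \<Rightarrow> 'm set \<Rightarrow> bool" where
  "submodule R M K \<longleftrightarrow> K \<subseteq> carrier M \<and> \<zero>\<^bsub>M\<^esub> \<in> K \<and>
     (\<forall>x\<in>K. \<forall>y\<in>K. x \<oplus>\<^bsub>M\<^esub> y \<in> K) \<and> (\<forall>x\<in>K. \<ominus>\<^bsub>M\<^esub> x \<in> K) \<and>
     (\<forall>x\<in>K. \<forall>r\<in>carrier R. smult M r x \<in> K)"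

definition module_hom :: "'a ring \<Rightarrow> ('a, 'm) module \<Rightarrow> ('a, 'n) module \<Rightarrow> ('m \<Rightarrow> 'n) \<Rightarrow> bool" where
  "module_hom R M N f \<longleftrightarrow> (\<forall>x\<in>carrier M. f x \<in> carrier N) \<and>
     (\<forall>x\<in>carrier M. \<forall>y\<in>carrier M. f (x \<oplus>\<^bsub>M\<^esub> y) = f x \<oplus>\<^bsub>N\<^esub> f y) \<and>
     (\<forall>x\<in>carrier M. \<forall>r\<in>carrier R. f (smult M r x) = smult N r (f x))"

definition RR :: "'a ring \<Rightarrow> ('a, 'a) module" where
  "RR R = \<lparr>carrier = carrier R, mult = mult R, one = one R, zero = zero R, add = add R,
           smult = (\<lambda>r x. x \<otimes>\<^bsub>R\<^esub> r)\<rparr>"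

definition right_ideal :: "'a ring \<Rightarrow> 'a set \<Rightarrow> bool" where
  "right_ideal R I \<longleftrightarrow> submodule R (RR R) I"

definition quot_mod :: "'a ring \<Rightarrow> ('a, 'm) module \<Rightarrow> 'm set \<Rightarrow> ('a, 'm set) module" where
  "quot_mod R M K = \<lparr>carrier = {K +>\<^bsub>M\<^esub> x | x. x \<in> carrier M},
     mult = (\<lambda>A B. K), one = K, zero = K,
     add = (\<lambda>A B. A <+>\<^bsub>M\<^esub> B),
     smult = (\<lambda>r A. K +>\<^bsub>M\<^esub> smult M r (SOME a. a \<in> A))\<rparr>"

definition span :: "'a ring \<Rightarrow> ('a, 'm) module \<Rightarrow> 'm set \<Rightarrow> 'm set" where
  "span R M S = \<Inter>{K. submodule R M K \<and> S \<subseteq> K}"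

definition fin_gen :: "'a ring \<Rightarrow> ('a, 'm) module \<Rightarrow> bool" where
  "fin_gen R M \<longleftrightarrow> (\<exists>S. finite S \<and> S \<subseteq> carrier M \<and> span R M S = carrier M)"

definition direct_summand :: "'a ring \<Rightarrow> ('a, 'm) module \<Rightarrow> 'm set \<Rightarrow> bool" where
  "direct_summand R M K \<longleftrightarrow> submodule R M K \<and>
     (\<exists>L. submodule R M L \<and> K \<inter> L = {\<zero>\<^bsub>M\<^esub>} \<and>
          (\<forall>x\<in>carrier M. \<exists>k\<in>K. \<exists>l\<in>L. x = k \<oplus>\<^bsub>M\<^esub> l))"

definition free_mod :: "'a ring \<Rightarrow> 'i set \<Rightarrow> ('a, 'i \<Rightarrow> 'a) module" where
  "free_mod R I = \<lparr>carrier = {f. (\<forall>i\<in>I. f i \<in> carrier R) \<and> (\<forall>i. i \<notin> I \<longrightarrow> f i = \<zero>\<^bsub>R\<^esub>) \<and>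
                               finite {i. f i \<noteq> \<zero>\<^bsub>R\<^esub>}},
     mult = (\<lambda>f g i. \<zero>\<^bsub>R\<^esub>), one = (\<lambda>i. \<zero>\<^bsub>R\<^esub>), zero = (\<lambda>i. \<zero>\<^bsub>R\<^esub>),
     add = (\<lambda>f g i. f i \<oplus>\<^bsub>R\<^esub> g i),
     smult = (\<lambda>r f i. f i \<otimes>\<^bsub>R\<^esub> r)\<rparr>"

text \<open>Projective: isomorphic to a direct summand of a free module (the free module on
  the underlying set of M suffices).\<close>
definition projective :: "'a ring \<Rightarrow> ('a, 'm) module \<Rightarrow> bool" where
  "projective R M \<longleftrightarrow> (\<exists>f. module_hom R M (free_mod R (carrier M)) f \<and> inj_on f (carrier M) \<and>
      direct_summand R (free_mod R (carrier M)) (f ` carrier M))"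

definition bounded :: "'a ring \<Rightarrow> ('a, 'm) module \<Rightarrow> bool" where
  "bounded R M \<longleftrightarrow> (\<forall>f. module_hom R M (RR R) f \<longrightarrow> (\<forall>x\<in>carrier M. f x = \<zero>\<^bsub>R\<^esub>))"

definition torsB :: "'a ring \<Rightarrow> ('a, 'm) module \<Rightarrow> 'm set" where
  "torsB R M = \<Union>{K. submodule R M K \<and> bounded R (M\<lparr>carrier := K\<rparr>)}"

definition essential_right_ideal :: "'a ring \<Rightarrow> 'a set \<Rightarrow> bool" where
  "essential_right_ideal R I \<longleftrightarrow> right_ideal R I \<and>
     (\<forall>J. right_ideal R J \<and> J \<noteq> {\<zero>\<^bsub>R\<^esub>} \<longrightarrow> I \<inter> J \<noteq> {\<zero>\<^bsub>R\<^esub>})"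

definition singular_sub :: "'a ring \<Rightarrow> ('a, 'm) module \<Rightarrow> 'm set" where
  "singular_sub R M = {x \<in> carrier M.
      essential_right_ideal R {r \<in> carrier R. smult M r x = \<zero>\<^bsub>M\<^esub>}}"

definition singular :: "'a ring \<Rightarrow> ('a, 'm) module \<Rightarrow> bool" where
  "singular R M \<longleftrightarrow> singular_sub R M = carrier M"

definition nonsingular :: "'a ring \<Rightarrow> ('a, 'm) module \<Rightarrow> bool" where
  "nonsingular R M \<longleftrightarrow> singular_sub R M = {\<zero>\<^bsub>M\<^esub>}"

definition torsT :: "'a ring \<Rightarrow> ('a, 'm) module \<Rightarrow> 'm set" where
  "torsT R M = {x \<in> carrier M.
      singular_sub R M +>\<^bsub>M\<^esub> x \<in> singular_sub R (quot_mod R M (singular_sub R M))}"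

definition clB :: "'a ring \<Rightarrow> ('a, 'm) module \<Rightarrow> 'm set \<Rightarrow> 'm set" where
  "clB R M K = {x \<in> carrier M. K +>\<^bsub>M\<^esub> x \<in> torsB R (quot_mod R M K)}"

definition clT :: "'a ring \<Rightarrow> ('a, 'm) module \<Rightarrow> 'm set \<Rightarrow> 'm set" where
  "clT R M K = {x \<in> carrier M. K +>\<^bsub>M\<^esub> x \<in> torsT R (quot_mod R M K)}"

definition right_semihereditary :: "'a ring \<Rightarrow> bool" where
  "right_semihereditary R \<longleftrightarrow> ring R \<and>
     (\<forall>I. right_ideal R I \<and> fin_gen R ((RR R)\<lparr>carrier := I\<rparr>) \<longrightarrow>
          projective R ((RR R)\<lparr>carrier := I\<rparr>))"

definition right_nonsingular :: "'a ring \<Rightarrow> bool" where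
  "right_nonsingular R \<longleftrightarrow> nonsingular R (RR R)"

text \<open>Every finitely generated module is a quotient of R^n, hence isomorphic to a module
  whose elements are sets of functions nat \<Rightarrow> 'a; we quantify over those.\<close>
definition right_strongly_semihereditary :: "'a ring \<Rightarrow> bool" where
  "right_strongly_semihereditary R \<longleftrightarrow> ring R \<and> right_nonsingular R \<and>
     (\<forall>N :: ('a, (nat \<Rightarrow> 'a) set) module.
        right_module R N \<and> fin_gen R N \<and> nonsingular R N \<longrightarrow> projective R N)"

definition baer_ring :: "('b, 'c) ring_scheme \<Rightarrow> bool" where
  "baer_ring A \<longleftrightarrow> (\<forall>S \<subseteq> carrier A. \<exists>e\<in>carrier A. e \<otimes>\<^bsub>A\<^esub> e = e \<and>
      {x \<in> carrier A. \<forall>s\<in>S. s \<otimes>\<^bsub>A\<^esub> x = \<zero>\<^bsub>A\<^esub>} = {e \<otimes>\<^bsub>A\<^esub> r | r. r \<in> carrier A})"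

definition matring :: "'a ring \<Rightarrow> nat \<Rightarrow> (nat \<Rightarrow> nat \<Rightarrow> 'a) ring" where
  "matring R n = \<lparr>carrier = {A. \<forall>i j. (i < n \<and> j < n \<longrightarrow> A i j \<in> carrier R) \<and>
                                      (\<not> (i < n \<and> j < n) \<longrightarrow> A i j = \<zero>\<^bsub>R\<^esub>)},
     mult = (\<lambda>A B i j. if i < n \<and> j < n then (\<Oplus>\<^bsub>R\<^esub> k\<in>{..<n}. A i k \<otimes>\<^bsub>R\<^esub> B k j) else \<zero>\<^bsub>R\<^esub>),
     one = (\<lambda>i j. if i < n \<and> j < n \<and> i = j then \<one>\<^bsub>R\<^esub> else \<zero>\<^bsub>R\<^esub>),
     zero = (\<lambda>i j. \<zero>\<^bsub>R\<^esub>),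
     add = (\<lambda>A B i j. if i < n \<and> j < n then A i j \<oplus>\<^bsub>R\<^esub> B i j else \<zero>\<^bsub>R\<^esub>)\<rparr>"

end

theory Submission
  imports Defs
begin

locale rmod =
  fixes R :: "'a ring" and M :: "('a,'m) module"
  assumes rm: "right_module R M"
begin

lemma ringR: "ring R" using rm unfolding right_module_def by blast
lemma agM: "abelian_group M" using rm unfolding right_module_def by blast

sublocale R: ring R by (rule ringR)
sublocale M: abelian_group M by (rule agM)

lemma sm_closed[simp,intro]: "r \<in> carrier R \<Longrightarrow> x \<in> carrier M \<Longrightarrow> smult M r x \<in> carrier M"
  using rm unfolding right_module_def by blast
lemma sm_add_l: "r \<in> carrier R \<Longrightarrow> s \<in> carrier R \<Longrightarrow> x \<in> carrier M \<Longrightarrow>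
   smult M (r \<oplus>\<^bsub>R\<^esub> s) x = smult M r x \<oplus>\<^bsub>M\<^esub> smult M s x"
  using rm unfolding right_module_def by blast
lemma sm_add_r: "r \<in> carrier R \<Longrightarrow> x \<in> carrier M \<Longrightarrow> y \<in> carrier M \<Longrightarrow>
   smult M r (x \<oplus>\<^bsub>M\<^esub> y) = smult M r x \<oplus>\<^bsub>M\<^esub> smult M r y"
  using rm unfolding right_module_def by blast
lemma sm_mult: "r \<in> carrier R \<Longrightarrow> s \<in> carrier R \<Longrightarrow> x \<in> carrier M \<Longrightarrow>
   smult M (r \<otimes>\<^bsub>R\<^esub> s) x = smult M s (smult M r x)"
  using rm unfolding right_module_def by blast
lemma sm_one[simp]: "x \<in> carrier M \<Longrightarrow> smult M \<one>\<^bsub>R\<^esub> x = x"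
  using rm unfolding right_module_def by blast

lemma self_add_zero: "a \<in> carrier M \<Longrightarrow> a \<oplus>\<^bsub>M\<^esub> a = a \<Longrightarrow> a = \<zero>\<^bsub>M\<^esub>"
  by (metis M.add.l_cancel_one' M.zero_closed M.r_zero)

lemma sm_zero_r[simp]: "r \<in> carrier R \<Longrightarrow> smult M r \<zero>\<^bsub>M\<^esub> = \<zero>\<^bsub>M\<^esub>"
  by (metis M.zero_closed M.l_zero self_add_zero sm_add_r sm_closed)
lemma sm_zero_l[simp]: "x \<in> carrier M \<Longrightarrow> smult M \<zero>\<^bsub>R\<^esub> x = \<zero>\<^bsub>M\<^esub>"
  by (metis R.zero_closed R.l_zero self_add_zero sm_add_l sm_closed)
lemma sm_neg_l: "r \<in> carrier R \<Longrightarrow> x \<in> carrier M \<Longrightarrow> smult M (\<ominus>\<^bsub>R\<^esub> r) x = \<ominus>\<^bsub>M\<^esub> smult M r x"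
  by (metis M.minus_equality R.a_inv_closed R.l_neg sm_add_l sm_closed sm_zero_l)
lemma sm_neg_r: "r \<in> carrier R \<Longrightarrow> x \<in> carrier M \<Longrightarrow> smult M r (\<ominus>\<^bsub>M\<^esub> x) = \<ominus>\<^bsub>M\<^esub> smult M r x"
  by (metis M.minus_equality M.a_inv_closed M.l_neg sm_add_r sm_closed sm_zero_r)
lemma sm_minus_r: "r \<in> carrier R \<Longrightarrow> x \<in> carrier M \<Longrightarrow> y \<in> carrier M \<Longrightarrow>
   smult M r (x \<ominus>\<^bsub>M\<^esub> y) = smult M r x \<ominus>\<^bsub>M\<^esub> smult M r y"
  by (simp add: M.minus_eq sm_add_r sm_neg_r)
lemma sm_minus_l: "r \<in> carrier R \<Longrightarrow> s \<in> carrier R \<Longrightarrow> x \<in> carrier M \<Longrightarrow>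
   smult M (r \<ominus>\<^bsub>R\<^esub> s) x = smult M r x \<ominus>\<^bsub>M\<^esub> smult M s x"
  by (simp add: R.minus_eq M.minus_eq sm_add_l sm_neg_l)

lemma sm_finsum_r:
  assumes "finite A" "r \<in> carrier R" "f \<in> A \<rightarrow> carrier M"
  shows "smult M r (finsum M f A) = finsum M (\<lambda>i. smult M r (f i)) A"
  using assms
proof (induct A rule: finite_induct)
  case empty then show ?case by simp
next
  case (insert x F)
  then show ?case by (simp add: Pi_def M.finsum_insert sm_add_r M.finsum_closed)
qed

lemma sm_finsum_l:
  assumes "finite A" "x \<in> carrier M" "f \<in> A \<rightarrow> carrier R"
  shows "smult M (finsum R f A) x = finsum M (\<lambda>i. smult M (f i) x) A"
  using assms
proof (induct A rule: finite_induct)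
  case empty then show ?case by simp
next
  case (insert y F)
  then show ?case by (simp add: Pi_def M.finsum_insert R.finsum_insert sm_add_l R.finsum_closed)
qed

end

lemma rmodI: "right_module R M \<Longrightarrow> rmod R M" by (simp add: rmod_def)

context rmod begin

lemma submodule_subgroup:
  assumes "submodule R M K" shows "abelian_subgroup K M"
proof -
  have "additive_subgroup K M"
    using assms unfolding submodule_def additive_subgroup_def
    by (intro subgroup.intro) (auto simp: a_inv_def)
  then show ?thesis by (intro abelian_subgroupI3 agM)
qed

lemma submodule_finsum:
  assumes "submodule R M K" "finite A" "f \<in> A \<rightarrow> K"
  shows "finsum M f A \<in> K"
  using assms(2,3)
proof (induct A rule: finite_induct)
  case empty then show ?case using assms(1) by (simp add: submodule_def)
next
  case (insert x F)
  have sub: "K \<subseteq> carrier M" using assms(1) by (simp add: submodule_def)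
  with insert show ?case using assms(1)
    by (subst M.finsum_insert) (auto simp: submodule_def Pi_def)
qed

lemma submodule_minus:
  assumes "submodule R M K" "x \<in> K" "y \<in> K" shows "x \<ominus>\<^bsub>M\<^esub> y \<in> K"
  using assms unfolding submodule_def a_minus_def by blast

lemma submodule_carrier: "submodule R M K \<Longrightarrow> x \<in> K \<Longrightarrow> x \<in> carrier M"
  unfolding submodule_def by blast

lemma submodule_restrict: "submodule R M K \<Longrightarrow> right_module R (M\<lparr>carrier := K\<rparr>)"
proof -
  assume K: "submodule R M K"
  have sub: "K \<subseteq> carrier M" using K by (simp add: submodule_def)
  have ag: "abelian_group (M\<lparr>carrier := K\<rparr>)"
  proof (rule abelian_groupI, goal_cases)
    case (1 x y) then show ?case using K by (simp add: submodule_def)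
  next case 2 then show ?case using K by (simp add: submodule_def)
  next case (3 x y z) then show ?case using sub by (simp add: M.a_assoc subsetD)
  next case (4 x y) then show ?case using sub by (simp add: M.a_comm subsetD)
  next case (5 x) then show ?case using sub by (simp add: subsetD)
  next case (6 x) then show ?case using K sub
      by (intro bexI[of _ "\<ominus>\<^bsub>M\<^esub> x"]) (auto simp: submodule_def subsetD M.l_neg)
  qed
  show ?thesis unfolding right_module_def
    using ag ringR K sub sm_add_l sm_add_r sm_mult sm_one
    by (auto simp: submodule_def subset_iff)
qed

end

locale rhom = M: rmod R M + N: rmod R N for R :: "'a ring" and M :: "('a,'m) module"
  and N :: "('a,'n) module" + fixes h assumes hom: "module_hom R M N h"
begin

lemma h_closed[simp,intro]: "x \<in> carrier M \<Longrightarrow> h x \<in> carrier N"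
  using hom unfolding module_hom_def by blast
lemma h_add: "x \<in> carrier M \<Longrightarrow> y \<in> carrier M \<Longrightarrow> h (x \<oplus>\<^bsub>M\<^esub> y) = h x \<oplus>\<^bsub>N\<^esub> h y"
  using hom unfolding module_hom_def by blast
lemma h_sm: "x \<in> carrier M \<Longrightarrow> r \<in> carrier R \<Longrightarrow> h (smult M r x) = smult N r (h x)"
  using hom unfolding module_hom_def by blast
lemma h_zero[simp]: "h \<zero>\<^bsub>M\<^esub> = \<zero>\<^bsub>N\<^esub>"
  by (metis M.M.zero_closed M.M.l_zero N.self_add_zero h_add h_closed)
lemma h_neg: "x \<in> carrier M \<Longrightarrow> h (\<ominus>\<^bsub>M\<^esub> x) = \<ominus>\<^bsub>N\<^esub> h x"
  by (metis M.M.a_inv_closed M.M.l_neg N.M.minus_equality h_add h_closed h_zero)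
lemma h_minus: "x \<in> carrier M \<Longrightarrow> y \<in> carrier M \<Longrightarrow> h (x \<ominus>\<^bsub>M\<^esub> y) = h x \<ominus>\<^bsub>N\<^esub> h y"
  by (simp add: M.M.minus_eq N.M.minus_eq h_add h_neg)
lemma h_finsum:
  assumes "finite A" "f \<in> A \<rightarrow> carrier M"
  shows "h (finsum M f A) = finsum N (\<lambda>i. h (f i)) A"
  using assms
proof (induct A rule: finite_induct)
  case empty then show ?case by simp
next
  case (insert x F)
  then show ?case by (simp add: Pi_def M.M.finsum_insert N.M.finsum_insert h_add M.M.finsum_closed)
qed

end

lemma rhomI: "right_module R M \<Longrightarrow> right_module R N \<Longrightarrow> module_hom R M N h \<Longrightarrow> rhom R M N h"
  by (simp add: rhom_def rmod_def rhom_axioms_def)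

lemma module_hom_comp: "module_hom R M N f \<Longrightarrow> module_hom R N P g \<Longrightarrow> module_hom R M P (g \<circ> f)"
  unfolding module_hom_def by auto

locale rquot = rmod + fixes K assumes sub: "submodule R M K"
begin

abbreviation "Q \<equiv> quot_mod R M K"

lemma asub: "abelian_subgroup K M" by (rule submodule_subgroup[OF sub])
lemma K_sub: "K \<subseteq> carrier M" using sub by (simp add: submodule_def)

lemma Q_carrier: "carrier Q = {K +>\<^bsub>M\<^esub> x | x. x \<in> carrier M}"
  by (simp add: quot_mod_def)

lemma coset_in_Q[simp,intro]: "x \<in> carrier M \<Longrightarrow> K +>\<^bsub>M\<^esub> x \<in> carrier Q"
  by (auto simp: Q_carrier)

lemma Q_add: "x \<in> carrier M \<Longrightarrow> y \<in> carrier M \<Longrightarrow>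
   (K +>\<^bsub>M\<^esub> x) \<oplus>\<^bsub>Q\<^esub> (K +>\<^bsub>M\<^esub> y) = K +>\<^bsub>M\<^esub> (x \<oplus>\<^bsub>M\<^esub> y)"
  by (simp add: quot_mod_def abelian_subgroup.a_rcos_sum[OF asub])

lemma K_coset: "K +>\<^bsub>M\<^esub> \<zero>\<^bsub>M\<^esub> = K"
  by (simp add: abelian_subgroup.a_rcos_const[OF asub] submodule_def sub[unfolded submodule_def])

lemma Q_zero: "\<zero>\<^bsub>Q\<^esub> = K +>\<^bsub>M\<^esub> \<zero>\<^bsub>M\<^esub>"
  by (simp add: quot_mod_def K_coset)

lemma coset_eq: "x \<in> carrier M \<Longrightarrow> y \<in> carrier M \<Longrightarrow>
   (K +>\<^bsub>M\<^esub> x = K +>\<^bsub>M\<^esub> y) \<longleftrightarrow> x \<ominus>\<^bsub>M\<^esub> y \<in> K"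
proof -
  assume x: "x \<in> carrier M" and y: "y \<in> carrier M"
  interpret S: abelian_subgroup K M by (rule asub)
  show ?thesis
  proof
    assume "K +>\<^bsub>M\<^esub> x = K +>\<^bsub>M\<^esub> y"
    then have "x \<in> K +>\<^bsub>M\<^esub> y" using S.a_rcos_self[OF x] by simp
    then show "x \<ominus>\<^bsub>M\<^esub> y \<in> K" using S.a_rcos_module_imp[OF y] by (simp add: a_minus_def)
  next
    assume "x \<ominus>\<^bsub>M\<^esub> y \<in> K"
    then have "x \<in> K +>\<^bsub>M\<^esub> y" using S.a_rcos_module_rev[OF y x] by (simp add: a_minus_def)
    then show "K +>\<^bsub>M\<^esub> x = K +>\<^bsub>M\<^esub> y" using S.a_repr_independence'[OF _ y] by simp
  qed
qed

lemma coset_zero_iff: "x \<in> carrier M \<Longrightarrow> (K +>\<^bsub>M\<^esub> x = K) \<longleftrightarrow> x \<in> K"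
proof -
  assume x: "x \<in> carrier M"
  have "\<ominus>\<^bsub>M\<^esub> \<zero>\<^bsub>M\<^esub> = \<zero>\<^bsub>M\<^esub>" by (rule M.minus_equality) auto
  note z = this
  show ?thesis using coset_eq[of x "\<zero>\<^bsub>M\<^esub>"] x by (simp add: z K_coset M.minus_eq M.r_zero)
qed

lemma Q_sm: "x \<in> carrier M \<Longrightarrow> r \<in> carrier R \<Longrightarrow>
   smult Q r (K +>\<^bsub>M\<^esub> x) = K +>\<^bsub>M\<^esub> (smult M r x)"
proof -
  assume x: "x \<in> carrier M" and r: "r \<in> carrier R"
  interpret S: abelian_subgroup K M by (rule asub)
  define a where "a = (SOME a. a \<in> K +>\<^bsub>M\<^esub> x)"
  have "a \<in> K +>\<^bsub>M\<^esub> x" unfolding a_def using S.a_rcos_self[OF x] by (rule someI)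
  then have ac: "a \<in> carrier M" and ak: "a \<ominus>\<^bsub>M\<^esub> x \<in> K"
    using S.a_elemrcos_carrier[OF x] S.a_rcos_module_imp[OF x] by (auto simp: a_minus_def)
  have "smult M r a \<ominus>\<^bsub>M\<^esub> smult M r x \<in> K"
    using sm_minus_r[OF r ac x] ak sub r unfolding submodule_def by (metis)
  then have "K +>\<^bsub>M\<^esub> smult M r a = K +>\<^bsub>M\<^esub> smult M r x"
    using coset_eq ac x r by simp
  then show ?thesis by (simp add: quot_mod_def a_def)
qed

lemma Q_cases: "A \<in> carrier Q \<Longrightarrow> (\<And>x. x \<in> carrier M \<Longrightarrow> A = K +>\<^bsub>M\<^esub> x \<Longrightarrow> P) \<Longrightarrow> P"
  by (auto simp: Q_carrier)

lemma Q_ag: "abelian_group Q"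
proof (rule abelian_groupI, goal_cases)
  case (1 x y) then show ?case by (auto elim!: Q_cases simp: Q_add)
next case 2 then show ?case by (simp add: Q_zero)
next case (3 x y z) then show ?case by (auto elim!: Q_cases simp: Q_add M.a_assoc)
next case (4 x y) then show ?case by (auto elim!: Q_cases simp: Q_add M.a_comm)
next case (5 x) then show ?case by (auto elim!: Q_cases simp: Q_add Q_zero)
next case (6 x) then show ?case
    by (auto elim!: Q_cases simp: Q_add Q_zero M.l_neg intro!: bexI[of _ "K +>\<^bsub>M\<^esub> (\<ominus>\<^bsub>M\<^esub> _)"])
qed

lemma Q_rm: "right_module R Q"
  unfolding right_module_def
proof (intro conjI ballI)
  show "ring R" by (rule ringR)
  show "abelian_group Q" by (rule Q_ag)
qed (auto elim!: Q_cases simp: Q_sm Q_add sm_add_l sm_add_r sm_mult)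

sublocale Qm: rmod R Q by (rule rmodI[OF Q_rm])

lemma Q_neg: "x \<in> carrier M \<Longrightarrow> \<ominus>\<^bsub>Q\<^esub> (K +>\<^bsub>M\<^esub> x) = K +>\<^bsub>M\<^esub> (\<ominus>\<^bsub>M\<^esub> x)"
  by (metis M.a_inv_closed M.l_neg Q_add Q_zero Qm.M.minus_equality coset_in_Q)

lemma qmap_hom: "module_hom R M Q (\<lambda>x. K +>\<^bsub>M\<^esub> x)"
  unfolding module_hom_def by (auto simp: Q_add Q_sm)

lemma qmap_rhom: "rhom R M Q (\<lambda>x. K +>\<^bsub>M\<^esub> x)"
  by (intro rhomI rm Q_rm qmap_hom)

end

lemma rquotI: "right_module R M \<Longrightarrow> submodule R M K \<Longrightarrow> rquot R M K"
  by (simp add: rquot_def rmod_def rquot_axioms_def)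

lemma RR_simps[simp]: "carrier (RR R) = carrier R" "add (RR R) = add R" "zero (RR R) = zero R"
  "smult (RR R) r x = x \<otimes>\<^bsub>R\<^esub> r" "mult (RR R) = mult R"
  by (simp_all add: RR_def)

lemma RR_rm: "ring R \<Longrightarrow> right_module R (RR R)"
proof -
  assume r: "ring R"
  interpret R: ring R by (rule r)
  have ag: "abelian_group (RR R)"
    by (rule abelian_groupI) (auto simp: R.a_ac intro: R.l_neg)
  show ?thesis unfolding right_module_def
    using ag r by (auto simp: R.l_distr R.r_distr R.m_assoc)
qed

lemma RR_a_inv: "ring R \<Longrightarrow> x \<in> carrier R \<Longrightarrow> \<ominus>\<^bsub>RR R\<^esub> x = \<ominus>\<^bsub>R\<^esub> x"
proof -
  assume r: "ring R" and x: "x \<in> carrier R"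
  interpret R: ring R by (rule r)
  interpret RR: rmod R "RR R" by (intro rmodI RR_rm r)
  show ?thesis by (rule RR.M.minus_equality) (use x in \<open>auto intro: R.l_neg\<close>)
qed

lemma free_mod_simps[simp]: "add (free_mod R I) f g = (\<lambda>i. f i \<oplus>\<^bsub>R\<^esub> g i)"
  "zero (free_mod R I) = (\<lambda>i. \<zero>\<^bsub>R\<^esub>)" "smult (free_mod R I) r f = (\<lambda>i. f i \<otimes>\<^bsub>R\<^esub> r)"
  by (simp_all add: free_mod_def)

lemma free_mod_carrier: "f \<in> carrier (free_mod R I) \<longleftrightarrow>
   (\<forall>i\<in>I. f i \<in> carrier R) \<and> (\<forall>i. i \<notin> I \<longrightarrow> f i = \<zero>\<^bsub>R\<^esub>) \<and> finite {i. f i \<noteq> \<zero>\<^bsub>R\<^esub>}"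
  by (simp add: free_mod_def)

lemma free_mod_rm: fixes I :: "'i set" shows "ring R \<Longrightarrow> right_module R (free_mod R I)"
proof -
  assume r: "ring R"
  interpret R: ring R by (rule r)
  have fin_add: "finite {i. f i \<oplus>\<^bsub>R\<^esub> g i \<noteq> \<zero>\<^bsub>R\<^esub>}"
    if "finite {i. f i \<noteq> \<zero>\<^bsub>R\<^esub>}" "finite {i. g i \<noteq> \<zero>\<^bsub>R\<^esub>}"
       "\<forall>i. f i \<in> carrier R" "\<forall>i. g i \<in> carrier R" for f g
    by (rule finite_subset[OF _ finite_UnI[OF that(1,2)]]) (auto simp: that)
  have fin_mul: "finite {i. f i \<otimes>\<^bsub>R\<^esub> r \<noteq> \<zero>\<^bsub>R\<^esub>}"
    if "finite {i. f i \<noteq> \<zero>\<^bsub>R\<^esub>}" "\<forall>i. f i \<in> carrier R" "r \<in> carrier R" for f :: "'i \<Rightarrow> 'a" and r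
    by (rule finite_subset[OF _ that(1)]) (auto simp: that)
  have fin_neg: "finite {i. \<ominus>\<^bsub>R\<^esub> f i \<noteq> \<zero>\<^bsub>R\<^esub>}"
    if "finite {i. f i \<noteq> \<zero>\<^bsub>R\<^esub>}" "\<forall>i. f i \<in> carrier R" for f :: "'i \<Rightarrow> 'a"
    by (rule finite_subset[OF _ that(1)]) (auto simp: that)
  have allc: "\<forall>i. f i \<in> carrier R" if "f \<in> carrier (free_mod R I)" for f
    using that by (auto simp: free_mod_carrier) 
  have ag: "abelian_group (free_mod R I)"
  proof (rule abelian_groupI, goal_cases)
    case (1 x y) then show ?case using allc[OF 1(1)] allc[OF 1(2)] fin_add[of x y]
        by (auto simp: free_mod_carrier)
  next case 2 then show ?case by (simp add: free_mod_carrier)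
  next case (3 x y z) then show ?case using allc[OF 3(1)] allc[OF 3(2)] allc[OF 3(3)]
      by (auto simp: R.a_assoc)
  next case (4 x y) then show ?case using allc[OF 4(1)] allc[OF 4(2)]
      by (auto simp: R.a_comm)
  next case (5 x) then show ?case using allc[OF 5(1)] by (auto)
  next case (6 x) then show ?case using allc[OF 6(1)] fin_neg[of x]
      by (intro bexI[of _ "\<lambda>i. \<ominus>\<^bsub>R\<^esub> x i"]) (auto simp: free_mod_carrier intro: R.l_neg)
  qed
  show ?thesis unfolding right_module_def
  proof (intro conjI ballI)
  qed (use r ag allc fin_mul in \<open>auto simp: free_mod_carrier R.l_distr R.r_distr R.m_assoc\<close>)
qed

lemma free_mod_a_inv: "ring R \<Longrightarrow> f \<in> carrier (free_mod R I) \<Longrightarrow>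
   \<ominus>\<^bsub>free_mod R I\<^esub> f = (\<lambda>i. \<ominus>\<^bsub>R\<^esub> f i)"
proof -
  assume r: "ring R" and f: "f \<in> carrier (free_mod R I)"
  interpret R: ring R by (rule r)
  interpret F: rmod R "free_mod R I" by (intro rmodI free_mod_rm r)
  have allc: "\<forall>i. f i \<in> carrier R"
    using f by (auto simp: free_mod_carrier) 
  have fin: "finite {i. \<ominus>\<^bsub>R\<^esub> f i \<noteq> \<zero>\<^bsub>R\<^esub>}"
    by (rule finite_subset[of _ "{i. f i \<noteq> \<zero>\<^bsub>R\<^esub>}"]) (use f allc in \<open>auto simp: free_mod_carrier\<close>)
  show ?thesis
    by (rule F.M.minus_equality) (use f allc fin in \<open>auto simp: free_mod_carrier intro: R.l_neg\<close>)
qed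

context rmod begin

lemma submodule_carrier_self: "submodule R M (carrier M)"
  unfolding submodule_def by auto

lemma span_mem: "S \<subseteq> carrier M \<Longrightarrow> x \<in> span R M S \<longleftrightarrow> (\<forall>K. submodule R M K \<and> S \<subseteq> K \<longrightarrow> x \<in> K)"
  unfolding span_def by blast

lemma lincomb_closed:
  assumes "finite A" "\<forall>i\<in>A. c i \<in> carrier R" "\<forall>i\<in>A. s i \<in> carrier M"
  shows "finsum M (\<lambda>i. smult M (c i) (s i)) A \<in> carrier M"
  using assms by (intro M.finsum_closed) auto

lemma fin_gen_intro:
  fixes n :: nat
  assumes s: "\<forall>i<n. s i \<in> carrier M"
    and all: "\<forall>x\<in>carrier M. \<exists>c. (\<forall>i<n. c i \<in> carrier R) \<and> x = finsum M (\<lambda>i. smult M (c i) (s i)) {..<n}"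
  shows "fin_gen R M"
  unfolding fin_gen_def
proof (intro exI conjI)
  let ?S = "s ` {..<n}"
  show "finite ?S" by simp
  show S: "?S \<subseteq> carrier M" using s by auto
  show "span R M ?S = carrier M"
  proof
    show "span R M ?S \<subseteq> carrier M" unfolding span_def using submodule_carrier_self S by blast
    show "carrier M \<subseteq> span R M ?S"
    proof
      fix x assume x: "x \<in> carrier M"
      obtain c where c: "\<forall>i<n. c i \<in> carrier R" and xe: "x = finsum M (\<lambda>i. smult M (c i) (s i)) {..<n}"
        using all x by blast
      show "x \<in> span R M ?S"
        unfolding span_mem[OF S]
      proof (intro allI impI)
        fix K assume K: "submodule R M K \<and> ?S \<subseteq> K"
        show "x \<in> K" unfolding xe
          by (rule submodule_finsum) (use K c in \<open>auto simp: submodule_def\<close>)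
      qed
    qed
  qed
qed


end

context rmod begin

lemma lc_add:
  fixes n :: nat
  assumes "\<forall>i<n. c i \<in> carrier R" "\<forall>i<n. d i \<in> carrier R" "\<forall>i<n. s i \<in> carrier M"
  shows "finsum M (\<lambda>i. smult M (c i) (s i)) {..<n} \<oplus>\<^bsub>M\<^esub> finsum M (\<lambda>i. smult M (d i) (s i)) {..<n}
    = finsum M (\<lambda>i. smult M (c i \<oplus>\<^bsub>R\<^esub> d i) (s i)) {..<n}"
proof -
  have "finsum M (\<lambda>i. smult M (c i \<oplus>\<^bsub>R\<^esub> d i) (s i)) {..<n}
     = finsum M (\<lambda>i. smult M (c i) (s i) \<oplus>\<^bsub>M\<^esub> smult M (d i) (s i)) {..<n}"
    by (rule M.finsum_cong'[OF refl]) (use assms in \<open>auto simp: sm_add_l\<close>)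
  also have "\<dots> = finsum M (\<lambda>i. smult M (c i) (s i)) {..<n} \<oplus>\<^bsub>M\<^esub> finsum M (\<lambda>i. smult M (d i) (s i)) {..<n}"
    by (rule M.finsum_addf) (use assms in auto)
  finally show ?thesis by simp
qed

lemma lc_sm:
  fixes n :: nat
  assumes "\<forall>i<n. c i \<in> carrier R" "r \<in> carrier R" "\<forall>i<n. s i \<in> carrier M"
  shows "smult M r (finsum M (\<lambda>i. smult M (c i) (s i)) {..<n})
    = finsum M (\<lambda>i. smult M (c i \<otimes>\<^bsub>R\<^esub> r) (s i)) {..<n}"
proof -
  have "smult M r (finsum M (\<lambda>i. smult M (c i) (s i)) {..<n})
     = finsum M (\<lambda>i. smult M r (smult M (c i) (s i))) {..<n}"
    by (rule sm_finsum_r) (use assms in auto)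
  also have "\<dots> = finsum M (\<lambda>i. smult M (c i \<otimes>\<^bsub>R\<^esub> r) (s i)) {..<n}"
    by (rule M.finsum_cong'[OF refl]) (use assms in \<open>auto simp: sm_mult\<close>)
  finally show ?thesis .
qed

lemma lc_zero:
  fixes n :: nat
  assumes "\<forall>i<n. s i \<in> carrier M"
  shows "finsum M (\<lambda>i. smult M \<zero>\<^bsub>R\<^esub> (s i)) {..<n} = \<zero>\<^bsub>M\<^esub>"
proof -
  have "finsum M (\<lambda>i. smult M \<zero>\<^bsub>R\<^esub> (s i)) {..<n} = finsum M (\<lambda>i. \<zero>\<^bsub>M\<^esub>) {..<n}"
    by (rule M.finsum_cong'[OF refl]) (use assms in auto)
  then show ?thesis by simp
qed

lemma lc_delta:
  fixes n :: nat
  assumes "\<forall>i<n. s i \<in> carrier M" "j < n"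
  shows "finsum M (\<lambda>i. smult M (if i = j then \<one>\<^bsub>R\<^esub> else \<zero>\<^bsub>R\<^esub>) (s i)) {..<n} = s j"
proof -
  have "finsum M (\<lambda>i. smult M (if i = j then \<one>\<^bsub>R\<^esub> else \<zero>\<^bsub>R\<^esub>) (s i)) {..<n}
      = finsum M (\<lambda>i. if i = j then s i else \<zero>\<^bsub>M\<^esub>) {..<n}"
    by (rule M.finsum_cong'[OF refl]) (use assms in auto)
  also have "\<dots> = s j" using assms by (intro M.add.finprod_singleton_swap) auto
  finally show ?thesis .
qed

lemma lc_submodule:
  fixes n :: nat
  assumes s: "\<forall>i<n. s i \<in> carrier M"
  shows "submodule R M {finsum M (\<lambda>i. smult M (c i) (s i)) {..<n} | c. \<forall>i<n. c i \<in> carrier R}"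
    (is "submodule R M ?L")
  unfolding submodule_def
proof (intro conjI ballI)
  show "?L \<subseteq> carrier M" using s by (auto intro!: lincomb_closed)
  show "\<zero>\<^bsub>M\<^esub> \<in> ?L"
    using lc_zero[OF s] by (intro CollectI exI[of _ "\<lambda>i. \<zero>\<^bsub>R\<^esub>"]) auto
next
  fix x y assume "x \<in> ?L" "y \<in> ?L"
  then obtain c d where c: "\<forall>i<n. c i \<in> carrier R" "x = finsum M (\<lambda>i. smult M (c i) (s i)) {..<n}"
    and d: "\<forall>i<n. d i \<in> carrier R" "y = finsum M (\<lambda>i. smult M (d i) (s i)) {..<n}"
    by blast
  have "x \<oplus>\<^bsub>M\<^esub> y = finsum M (\<lambda>i. smult M (c i \<oplus>\<^bsub>R\<^esub> d i) (s i)) {..<n}"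
    unfolding c(2) d(2) by (rule lc_add[OF c(1) d(1) s])
  moreover have "\<forall>i<n. c i \<oplus>\<^bsub>R\<^esub> d i \<in> carrier R" using c d by auto
  ultimately show "x \<oplus>\<^bsub>M\<^esub> y \<in> ?L" by (intro CollectI exI[of _ "\<lambda>i. c i \<oplus>\<^bsub>R\<^esub> d i"]) simp
next
  fix x r assume "x \<in> ?L" "r \<in> carrier R"
  then obtain c where c: "\<forall>i<n. c i \<in> carrier R" "x = finsum M (\<lambda>i. smult M (c i) (s i)) {..<n}"
    and r: "r \<in> carrier R" by blast
  have "smult M r x = finsum M (\<lambda>i. smult M (c i \<otimes>\<^bsub>R\<^esub> r) (s i)) {..<n}"
    unfolding c(2) by (rule lc_sm[OF c(1) r s])
  moreover have "\<forall>i<n. c i \<otimes>\<^bsub>R\<^esub> r \<in> carrier R" using c r by auto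
  ultimately show "smult M r x \<in> ?L" by (intro CollectI exI[of _ "\<lambda>i. c i \<otimes>\<^bsub>R\<^esub> r"]) simp
next
  fix x assume "x \<in> ?L"
  then obtain c where c: "\<forall>i<n. c i \<in> carrier R" "x = finsum M (\<lambda>i. smult M (c i) (s i)) {..<n}"
    by blast
  have xc: "x \<in> carrier M" using c s by (auto intro!: lincomb_closed)
  have "\<ominus>\<^bsub>M\<^esub> x = smult M (\<ominus>\<^bsub>R\<^esub> \<one>\<^bsub>R\<^esub>) x"
    using xc by (simp add: sm_neg_l)
  also have "\<dots> = finsum M (\<lambda>i. smult M (c i \<otimes>\<^bsub>R\<^esub> (\<ominus>\<^bsub>R\<^esub> \<one>\<^bsub>R\<^esub>)) (s i)) {..<n}"
    unfolding c(2) by (rule lc_sm[OF c(1) _ s]) simp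
  finally have "\<ominus>\<^bsub>M\<^esub> x = finsum M (\<lambda>i. smult M (c i \<otimes>\<^bsub>R\<^esub> (\<ominus>\<^bsub>R\<^esub> \<one>\<^bsub>R\<^esub>)) (s i)) {..<n}" .
  moreover have "\<forall>i<n. c i \<otimes>\<^bsub>R\<^esub> (\<ominus>\<^bsub>R\<^esub> \<one>\<^bsub>R\<^esub>) \<in> carrier R" using c by auto
  ultimately show "\<ominus>\<^bsub>M\<^esub> x \<in> ?L" by (intro CollectI exI[of _ "\<lambda>i. c i \<otimes>\<^bsub>R\<^esub> (\<ominus>\<^bsub>R\<^esub> \<one>\<^bsub>R\<^esub>)"]) simp
qed

lemma fin_gen_elim:
  assumes "fin_gen R M"
  obtains n :: nat and s where "n \<ge> 1" "\<forall>i<n. s i \<in> carrier M"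
    "\<forall>x\<in>carrier M. \<exists>c. (\<forall>i<n. c i \<in> carrier R) \<and> x = finsum M (\<lambda>i. smult M (c i) (s i)) {..<n}"
proof -
  obtain S where S: "finite S" "S \<subseteq> carrier M" "span R M S = carrier M"
    using assms unfolding fin_gen_def by blast
  obtain m t where St: "S = t ` {i. i < (m::nat)}" using finite_conv_nat_seg_image[THEN iffD1, OF S(1)] by blast
  define s where "s i = (if i < m then t i else \<zero>\<^bsub>M\<^esub>)" for i
  have s: "\<forall>i<Suc m. s i \<in> carrier M" using S(2) St by (auto simp: s_def)
  let ?L = "{finsum M (\<lambda>i. smult M (c i) (s i)) {..<Suc m} | c. \<forall>i<Suc m. c i \<in> carrier R}"
  have SL: "S \<subseteq> ?L"
  proof
    fix y assume "y \<in> S"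
    then obtain j where j: "j < m" "y = t j" using St by auto
    have "y = finsum M (\<lambda>i. smult M (if i = j then \<one>\<^bsub>R\<^esub> else \<zero>\<^bsub>R\<^esub>) (s i)) {..<Suc m}"
    proof -
      have "s j = t j" using j by (simp add: s_def)
      then show ?thesis using lc_delta[OF s, of j] j by simp
    qed
    then show "y \<in> ?L" by (intro CollectI exI[of _ "\<lambda>i. if i = j then \<one>\<^bsub>R\<^esub> else \<zero>\<^bsub>R\<^esub>"]) auto
  qed
  have "span R M S \<subseteq> ?L" unfolding span_def
    by (rule Inter_lower) (use lc_submodule[OF s] SL in simp)
  then have "carrier M \<subseteq> ?L" using S(3) by simp
  then have "\<forall>x\<in>carrier M. \<exists>c. (\<forall>i<Suc m. c i \<in> carrier R) \<and> x = finsum M (\<lambda>i. smult M (c i) (s i)) {..<Suc m}"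
    unfolding subset_iff mem_Collect_eq by metis
  then show ?thesis using that[of "Suc m" s] s by simp
qed

end

context rhom begin
lemma ker_sub: "submodule R M {x \<in> carrier M. h x = \<zero>\<^bsub>N\<^esub>}"
  unfolding submodule_def
  by (auto simp: h_add h_sm h_neg N.M.l_zero)

lemma img_sub: "submodule R N (h ` carrier M)"
  unfolding submodule_def
proof (intro conjI ballI)
  show "h ` carrier M \<subseteq> carrier N" by auto
  show "\<zero>\<^bsub>N\<^esub> \<in> h ` carrier M" using h_zero[symmetric] by blast
next
  fix x y assume "x \<in> h ` carrier M" "y \<in> h ` carrier M"
  then show "x \<oplus>\<^bsub>N\<^esub> y \<in> h ` carrier M" by (auto simp: h_add[symmetric])
next
  fix x assume "x \<in> h ` carrier M"
  then show "\<ominus>\<^bsub>N\<^esub> x \<in> h ` carrier M" by (auto simp: h_neg[symmetric])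
next
  fix x r assume "x \<in> h ` carrier M" "r \<in> carrier R"
  then show "smult N r x \<in> h ` carrier M" by (auto simp: h_sm[symmetric])
qed
end

context rmod begin

lemma dual_basis_projective:
  fixes n :: nat and xs :: "nat \<Rightarrow> 'm" and fs :: "nat \<Rightarrow> 'm \<Rightarrow> 'a"
  assumes xs: "\<forall>i<n. xs i \<in> carrier M"
    and fs: "\<forall>i<n. module_hom R M (RR R) (fs i)"
    and rep: "\<forall>x\<in>carrier M. x = finsum M (\<lambda>i. smult M (fs i x) (xs i)) {..<n}"
  shows "projective R M"
proof -
  let ?X = "carrier M"
  let ?F = "free_mod R ?X"
  interpret F: rmod R ?F by (intro rmodI free_mod_rm ringR)
  have fsc: "fs i x \<in> carrier R" if "i < n" "x \<in> carrier M" for i x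
    using fs that unfolding module_hom_def by auto
  have fsadd: "fs i (x \<oplus>\<^bsub>M\<^esub> y) = fs i x \<oplus>\<^bsub>R\<^esub> fs i y" if "i < n" "x \<in> carrier M" "y \<in> carrier M" for i x y
    using fs that unfolding module_hom_def by auto
  have fssm: "fs i (smult M r x) = fs i x \<otimes>\<^bsub>R\<^esub> r" if "i < n" "x \<in> carrier M" "r \<in> carrier R" for i x r
    using fs that unfolding module_hom_def by auto
  define A where "A p = {i\<in>{..<n}. xs i = p}" for p
  have finA: "finite (A p)" for p unfolding A_def by auto
  define \<sigma> where "\<sigma> x = (\<lambda>p. if p \<in> ?X then finsum R (\<lambda>i. fs i x) (A p) else \<zero>\<^bsub>R\<^esub>)" for x
  define \<pi> where "\<pi> \<phi> = finsum M (\<lambda>p. smult M (\<phi> p) p) {p. \<phi> p \<noteq> \<zero>\<^bsub>R\<^esub>}" for \<phi>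
  have allc: "\<phi> p \<in> carrier R" if "\<phi> \<in> carrier ?F" for \<phi> p
    using that by (cases "p \<in> ?X") (auto simp: free_mod_carrier)
  have suppX: "{p. \<phi> p \<noteq> \<zero>\<^bsub>R\<^esub>} \<subseteq> ?X" if "\<phi> \<in> carrier ?F" for \<phi>
    using that by (auto simp: free_mod_carrier)
  have suppfin: "finite {p. \<phi> p \<noteq> \<zero>\<^bsub>R\<^esub>}" if "\<phi> \<in> carrier ?F" for \<phi>
    using that by (auto simp: free_mod_carrier)
  have \<pi>_eq: "\<pi> \<phi> = finsum M (\<lambda>p. smult M (\<phi> p) p) T"
    if "\<phi> \<in> carrier ?F" "finite T" "{p. \<phi> p \<noteq> \<zero>\<^bsub>R\<^esub>} \<subseteq> T" "T \<subseteq> ?X" for \<phi> T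
    unfolding \<pi>_def
    by (rule M.add.finprod_mono_neutral_cong_left) (use that allc in auto)
  have \<pi>_closed: "\<pi> \<phi> \<in> carrier M" if "\<phi> \<in> carrier ?F" for \<phi>
    unfolding \<pi>_def using allc[OF that] suppX[OF that] by (intro M.finsum_closed) auto
  have \<pi>_hom: "module_hom R ?F M \<pi>"
    unfolding module_hom_def
  proof (intro conjI ballI)
    fix \<phi> assume "\<phi> \<in> carrier ?F" then show "\<pi> \<phi> \<in> carrier M" by (rule \<pi>_closed)
  next
    fix \<phi> \<psi> assume p: "\<phi> \<in> carrier ?F" and q: "\<psi> \<in> carrier ?F"
    let ?T = "{p. \<phi> p \<noteq> \<zero>\<^bsub>R\<^esub>} \<union> {p. \<psi> p \<noteq> \<zero>\<^bsub>R\<^esub>}"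
    have T: "finite ?T" "?T \<subseteq> ?X" using suppfin[OF p] suppfin[OF q] suppX[OF p] suppX[OF q] by auto
    have pq: "\<phi> \<oplus>\<^bsub>?F\<^esub> \<psi> \<in> carrier ?F" by (rule F.M.a_closed[OF p q])
    have "\<pi> (\<phi> \<oplus>\<^bsub>?F\<^esub> \<psi>) = finsum M (\<lambda>p. smult M ((\<phi> \<oplus>\<^bsub>?F\<^esub> \<psi>) p) p) ?T"
      by (rule \<pi>_eq[OF pq T(1) _ T(2)]) (use allc[OF p] allc[OF q] in auto)
    also have "\<dots> = finsum M (\<lambda>p. smult M (\<phi> p) p \<oplus>\<^bsub>M\<^esub> smult M (\<psi> p) p) ?T"
      by (rule M.finsum_cong'[OF refl]) (use T allc[OF p] allc[OF q] in \<open>auto simp: sm_add_l\<close>)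
    also have "\<dots> = finsum M (\<lambda>p. smult M (\<phi> p) p) ?T \<oplus>\<^bsub>M\<^esub> finsum M (\<lambda>p. smult M (\<psi> p) p) ?T"
      by (rule M.finsum_addf) (use T allc[OF p] allc[OF q] in auto)
    also have "\<dots> = \<pi> \<phi> \<oplus>\<^bsub>M\<^esub> \<pi> \<psi>"
      using \<pi>_eq[OF p T(1) _ T(2)] \<pi>_eq[OF q T(1) _ T(2)] by auto
    finally show "\<pi> (\<phi> \<oplus>\<^bsub>?F\<^esub> \<psi>) = \<pi> \<phi> \<oplus>\<^bsub>M\<^esub> \<pi> \<psi>" .
  next
    fix \<phi> r assume p: "\<phi> \<in> carrier ?F" and r: "r \<in> carrier R"
    let ?T = "{p. \<phi> p \<noteq> \<zero>\<^bsub>R\<^esub>}"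
    have pr: "smult ?F r \<phi> \<in> carrier ?F" by (rule F.sm_closed[OF r p])
    have "\<pi> (smult ?F r \<phi>) = finsum M (\<lambda>p. smult M ((smult ?F r \<phi>) p) p) ?T"
      by (rule \<pi>_eq[OF pr suppfin[OF p] _ suppX[OF p]]) (use allc[OF p] r in auto)
    also have "\<dots> = finsum M (\<lambda>p. smult M r (smult M (\<phi> p) p)) ?T"
      by (rule M.finsum_cong'[OF refl]) (use suppX[OF p] allc[OF p] r in \<open>auto simp: sm_mult\<close>)
    also have "\<dots> = smult M r (\<pi> \<phi>)"
      unfolding \<pi>_def by (rule sm_finsum_r[symmetric]) (use suppfin[OF p] suppX[OF p] allc[OF p] r in auto)
    finally show "\<pi> (smult ?F r \<phi>) = smult M r (\<pi> \<phi>)" .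
  qed
  have \<sigma>_closed: "\<sigma> x \<in> carrier ?F" if x: "x \<in> carrier M" for x
  proof -
    have "{p. \<sigma> x p \<noteq> \<zero>\<^bsub>R\<^esub>} \<subseteq> xs ` {..<n}"
    proof
      fix p assume "p \<in> {p. \<sigma> x p \<noteq> \<zero>\<^bsub>R\<^esub>}"
      then have "A p \<noteq> {}" unfolding \<sigma>_def by (auto split: if_splits)
      then show "p \<in> xs ` {..<n}" unfolding A_def by auto
    qed
    then have "finite {p. \<sigma> x p \<noteq> \<zero>\<^bsub>R\<^esub>}" by (rule finite_subset) simp
    moreover have "\<forall>p\<in>?X. \<sigma> x p \<in> carrier R"
      unfolding \<sigma>_def using x fsc by (auto intro!: R.finsum_closed simp: A_def)
    ultimately show ?thesis by (auto simp: free_mod_carrier \<sigma>_def)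
  qed
  have \<sigma>_hom: "module_hom R M ?F \<sigma>"
    unfolding module_hom_def
  proof (intro conjI ballI)
    fix x assume "x \<in> carrier M" then show "\<sigma> x \<in> carrier ?F" by (rule \<sigma>_closed)
  next
    fix x y assume x: "x \<in> carrier M" and y: "y \<in> carrier M"
    show "\<sigma> (x \<oplus>\<^bsub>M\<^esub> y) = \<sigma> x \<oplus>\<^bsub>?F\<^esub> \<sigma> y"
    proof
      fix p
      show "\<sigma> (x \<oplus>\<^bsub>M\<^esub> y) p = (\<sigma> x \<oplus>\<^bsub>?F\<^esub> \<sigma> y) p"
      proof (cases "p \<in> ?X")
        case True
        have "finsum R (\<lambda>i. fs i (x \<oplus>\<^bsub>M\<^esub> y)) (A p) = finsum R (\<lambda>i. fs i x \<oplus>\<^bsub>R\<^esub> fs i y) (A p)"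
          by (rule R.finsum_cong'[OF refl]) (use x y fsc in \<open>auto simp: A_def fsadd\<close>)
        also have "\<dots> = finsum R (\<lambda>i. fs i x) (A p) \<oplus>\<^bsub>R\<^esub> finsum R (\<lambda>i. fs i y) (A p)"
          by (rule R.finsum_addf) (use x y fsc in \<open>auto simp: A_def\<close>)
        finally show ?thesis using True by (simp add: \<sigma>_def)
      next
        case False then show ?thesis by (simp add: \<sigma>_def)
      qed
    qed
  next
    fix x r assume x: "x \<in> carrier M" and r: "r \<in> carrier R"
    show "\<sigma> (smult M r x) = smult ?F r (\<sigma> x)"
    proof
      fix p
      show "\<sigma> (smult M r x) p = smult ?F r (\<sigma> x) p"
      proof (cases "p \<in> ?X")
        case True
        have "finsum R (\<lambda>i. fs i (smult M r x)) (A p) = finsum R (\<lambda>i. fs i x \<otimes>\<^bsub>R\<^esub> r) (A p)"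
          by (rule R.finsum_cong'[OF refl]) (use x r fsc in \<open>auto simp: A_def fssm\<close>)
        also have "\<dots> = finsum R (\<lambda>i. fs i x) (A p) \<otimes>\<^bsub>R\<^esub> r"
          by (rule R.finsum_ldistr[symmetric]) (use x r fsc in \<open>auto simp: A_def\<close>)
        finally show ?thesis using True by (simp add: \<sigma>_def)
      next
        case False then show ?thesis using r by (simp add: \<sigma>_def)
      qed
    qed
  qed
  have \<pi>\<sigma>: "\<pi> (\<sigma> x) = x" if x: "x \<in> carrier M" for x
  proof -
    let ?T = "xs ` {..<n}"
    have T: "finite ?T" "?T \<subseteq> ?X" using xs by auto
    have supp: "{p. \<sigma> x p \<noteq> \<zero>\<^bsub>R\<^esub>} \<subseteq> ?T"
    proof
      fix p assume "p \<in> {p. \<sigma> x p \<noteq> \<zero>\<^bsub>R\<^esub>}"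
      then have "A p \<noteq> {}" unfolding \<sigma>_def by (auto split: if_splits)
      then show "p \<in> ?T" unfolding A_def by auto
    qed
    have "\<pi> (\<sigma> x) = finsum M (\<lambda>p. smult M (\<sigma> x p) p) ?T"
      by (rule \<pi>_eq[OF \<sigma>_closed[OF x] T(1) supp T(2)])
    also have "\<dots> = finsum M (\<lambda>p. finsum M (\<lambda>i. smult M (fs i x) (xs i)) (A p)) ?T"
    proof (rule M.finsum_cong'[OF refl])
      show "(\<lambda>p. finsum M (\<lambda>i. smult M (fs i x) (xs i)) (A p)) \<in> ?T \<rightarrow> carrier M"
        using x xs fsc by (auto intro!: M.finsum_closed simp: A_def)
    next
      fix p assume p: "p \<in> ?T"
      then have pX: "p \<in> ?X" using T by auto
      have "smult M (\<sigma> x p) p = smult M (finsum R (\<lambda>i. fs i x) (A p)) p" using pX by (simp add: \<sigma>_def)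
      also have "\<dots> = finsum M (\<lambda>i. smult M (fs i x) p) (A p)"
        by (rule sm_finsum_l) (use pX x fsc finA in \<open>auto simp: A_def\<close>)
      also have "\<dots> = finsum M (\<lambda>i. smult M (fs i x) (xs i)) (A p)"
        by (rule M.finsum_cong'[OF refl]) (use pX x fsc xs in \<open>auto simp: A_def\<close>)
      finally show "smult M (\<sigma> x p) p = finsum M (\<lambda>i. smult M (fs i x) (xs i)) (A p)" .
    qed
    also have "\<dots> = finsum M (\<lambda>i. smult M (fs i x) (xs i)) (\<Union>(A ` ?T))"
      by (rule M.add.finprod_UN_disjoint[symmetric])
         (use T finA x xs fsc in \<open>auto simp: A_def pairwise_def disjnt_def\<close>)
    also have "\<Union>(A ` ?T) = {..<n}" unfolding A_def by auto
    finally show ?thesis using rep x by simp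
  qed
  interpret \<sigma>h: rhom R M ?F \<sigma> by (intro rhomI rm free_mod_rm ringR \<sigma>_hom)
  interpret \<pi>h: rhom R ?F M \<pi> by (intro rhomI rm free_mod_rm ringR \<pi>_hom)
  show ?thesis
    unfolding projective_def
  proof (intro exI conjI)
    show "module_hom R M ?F \<sigma>" by (rule \<sigma>_hom)
    show "inj_on \<sigma> ?X" by (rule inj_on_inverseI[where g = \<pi>]) (rule \<pi>\<sigma>)
    show "direct_summand R ?F (\<sigma> ` ?X)"
      unfolding direct_summand_def
    proof (intro conjI exI)
      show "submodule R ?F (\<sigma> ` ?X)" by (rule \<sigma>h.img_sub)
      show "submodule R ?F {\<phi> \<in> carrier ?F. \<pi> \<phi> = \<zero>\<^bsub>M\<^esub>}" by (rule \<pi>h.ker_sub)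
      show "\<sigma> ` ?X \<inter> {\<phi> \<in> carrier ?F. \<pi> \<phi> = \<zero>\<^bsub>M\<^esub>} = {\<zero>\<^bsub>?F\<^esub>}"
      proof
        show "\<sigma> ` ?X \<inter> {\<phi> \<in> carrier ?F. \<pi> \<phi> = \<zero>\<^bsub>M\<^esub>} \<subseteq> {\<zero>\<^bsub>?F\<^esub>}"
        proof
          fix \<phi> assume "\<phi> \<in> \<sigma> ` ?X \<inter> {\<phi> \<in> carrier ?F. \<pi> \<phi> = \<zero>\<^bsub>M\<^esub>}"
          then obtain x where x: "x \<in> ?X" "\<phi> = \<sigma> x" "\<pi> (\<sigma> x) = \<zero>\<^bsub>M\<^esub>" by auto
          then have "x = \<zero>\<^bsub>M\<^esub>" using \<pi>\<sigma> by simp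
          then show "\<phi> \<in> {\<zero>\<^bsub>?F\<^esub>}" using x \<sigma>h.h_zero by simp
        qed
        show "{\<zero>\<^bsub>?F\<^esub>} \<subseteq> \<sigma> ` ?X \<inter> {\<phi> \<in> carrier ?F. \<pi> \<phi> = \<zero>\<^bsub>M\<^esub>}"
          using \<sigma>h.h_zero \<pi>h.h_zero M.zero_closed F.M.zero_closed by (metis (mono_tags, lifting) IntI empty_subsetI image_eqI insert_subset mem_Collect_eq)
      qed
      show "\<forall>\<phi>\<in>carrier ?F. \<exists>k\<in>\<sigma> ` ?X. \<exists>l\<in>{\<phi> \<in> carrier ?F. \<pi> \<phi> = \<zero>\<^bsub>M\<^esub>}. \<phi> = k \<oplus>\<^bsub>?F\<^esub> l"
      proof
        fix \<phi> assume p: "\<phi> \<in> carrier ?F"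
        let ?k = "\<sigma> (\<pi> \<phi>)"
        have k: "?k \<in> carrier ?F" using p by simp
        have l: "\<phi> \<ominus>\<^bsub>?F\<^esub> ?k \<in> carrier ?F" by (rule F.M.minus_closed[OF p k])
        have "\<pi> (\<phi> \<ominus>\<^bsub>?F\<^esub> ?k) = \<zero>\<^bsub>M\<^esub>"
          using \<pi>h.h_minus[OF p k] \<pi>\<sigma>[OF \<pi>_closed[OF p]] \<pi>_closed[OF p] by (simp add: M.r_neg M.minus_eq)
        moreover have "\<phi> = ?k \<oplus>\<^bsub>?F\<^esub> (\<phi> \<ominus>\<^bsub>?F\<^esub> ?k)"
          unfolding F.M.minus_eq using p k
          by (metis F.M.add.m_lcomm F.M.a_inv_closed F.M.r_neg F.M.r_zero)
        ultimately show "\<exists>k\<in>\<sigma> ` ?X. \<exists>l\<in>{\<phi> \<in> carrier ?F. \<pi> \<phi> = \<zero>\<^bsub>M\<^esub>}. \<phi> = k \<oplus>\<^bsub>?F\<^esub> l"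
          using l \<pi>_closed[OF p] by blast
      qed
    qed
  qed
qed

end

definition Hset :: "'a ring \<Rightarrow> ('a,'m) module \<Rightarrow> 'm set \<Rightarrow> ('m \<Rightarrow> 'a) set" where
  "Hset R M K = {f. module_hom R M (RR R) f \<and> (\<forall>k\<in>K. f k = \<zero>\<^bsub>R\<^esub>)}"

definition Cset :: "'a ring \<Rightarrow> ('a,'m) module \<Rightarrow> 'm set \<Rightarrow> 'm set" where
  "Cset R M K = {x \<in> carrier M. \<forall>f\<in>Hset R M K. f x = \<zero>\<^bsub>R\<^esub>}"

lemma (in abelian_monoid) finsum_swap:
  assumes "finite A" "finite B" "\<And>a b. a \<in> A \<Longrightarrow> b \<in> B \<Longrightarrow> F a b \<in> carrier G"
  shows "finsum G (\<lambda>a. finsum G (\<lambda>b. F a b) B) A = finsum G (\<lambda>b. finsum G (\<lambda>a. F a b) A) B"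
  using assms(1,3)
proof (induct A rule: finite_induct)
  case empty then show ?case using assms(2) by (simp add: finsum_zero)
next
  case (insert x A)
  have "finsum G (\<lambda>a. finsum G (\<lambda>b. F a b) B) (insert x A)
      = finsum G (\<lambda>b. F x b) B \<oplus> finsum G (\<lambda>a. finsum G (\<lambda>b. F a b) B) A"
    using insert assms(2) by (subst finsum_insert) (auto intro!: finsum_closed)
  also have "\<dots> = finsum G (\<lambda>b. F x b) B \<oplus> finsum G (\<lambda>b. finsum G (\<lambda>a. F a b) A) B"
    using insert by simp
  also have "\<dots> = finsum G (\<lambda>b. F x b \<oplus> finsum G (\<lambda>a. F a b) A) B"
    using insert assms(2) by (subst finsum_addf) (auto intro!: finsum_closed)
  also have "\<dots> = finsum G (\<lambda>b. finsum G (\<lambda>a. F a b) (insert x A)) B"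
    by (rule finsum_cong'[OF refl]) (use insert in \<open>auto intro!: finsum_closed\<close>)
  finally show ?case .
qed

lemma (in ring) sum_assoc:
  assumes "finite A" "finite B" "\<And>a. a \<in> A \<Longrightarrow> x a \<in> carrier R" "\<And>a b. a \<in> A \<Longrightarrow> b \<in> B \<Longrightarrow> y a b \<in> carrier R"
     "\<And>b. b \<in> B \<Longrightarrow> z b \<in> carrier R"
  shows "finsum R (\<lambda>a. x a \<otimes> finsum R (\<lambda>b. y a b \<otimes> z b) B) A
       = finsum R (\<lambda>b. finsum R (\<lambda>a. x a \<otimes> y a b) A \<otimes> z b) B"
proof -
  have "finsum R (\<lambda>a. x a \<otimes> finsum R (\<lambda>b. y a b \<otimes> z b) B) A
      = finsum R (\<lambda>a. finsum R (\<lambda>b. x a \<otimes> y a b \<otimes> z b) B) A"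
    by (rule finsum_cong'[OF refl]) (use assms in \<open>auto simp: finsum_rdistr m_assoc intro!: finsum_closed finsum_cong'\<close>)
  also have "\<dots> = finsum R (\<lambda>b. finsum R (\<lambda>a. x a \<otimes> y a b \<otimes> z b) A) B"
    by (rule finsum_swap) (use assms in auto)
  also have "\<dots> = finsum R (\<lambda>b. finsum R (\<lambda>a. x a \<otimes> y a b) A \<otimes> z b) B"
    by (rule finsum_cong'[OF refl]) (use assms in \<open>auto simp: finsum_ldistr intro!: finsum_closed\<close>)
  finally show ?thesis .
qed

locale coreloc = rmod R M for R :: "'a ring" and M :: "('a,'m) module" +
  fixes K :: "'m set" and n :: nat and s :: "nat \<Rightarrow> 'm" and e :: "nat \<Rightarrow> nat \<Rightarrow> 'a"
  assumes sub: "submodule R M K" and s: "\<forall>i<n. s i \<in> carrier M"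
    and span: "\<forall>x\<in>carrier M. \<exists>c. (\<forall>i<n. c i \<in> carrier R) \<and> x = finsum M (\<lambda>i. smult M (c i) (s i)) {..<n}"
    and ecar: "\<forall>i<n. \<forall>j<n. e i j \<in> carrier R"
    and eidem: "\<forall>i<n. \<forall>j<n. finsum R (\<lambda>k. e i k \<otimes>\<^bsub>R\<^esub> e k j) {..<n} = e i j"
    and eann: "\<forall>f\<in>Hset R M K. \<forall>j<n. finsum R (\<lambda>k. f (s k) \<otimes>\<^bsub>R\<^esub> e k j) {..<n} = \<zero>\<^bsub>R\<^esub>"
    and ecl: "\<forall>X. (\<forall>i<n. \<forall>j<n. X i j \<in> carrier R) \<and>
                 (\<forall>f\<in>Hset R M K. \<forall>j<n. finsum R (\<lambda>k. f (s k) \<otimes>\<^bsub>R\<^esub> X k j) {..<n} = \<zero>\<^bsub>R\<^esub>) \<longrightarrow>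
              (\<exists>Y. (\<forall>i<n. \<forall>j<n. Y i j \<in> carrier R) \<and>
                   (\<forall>i<n. \<forall>j<n. X i j = finsum R (\<lambda>k. e i k \<otimes>\<^bsub>R\<^esub> Y k j) {..<n}))"
begin

abbreviation "H \<equiv> Hset R M K"
abbreviation "C \<equiv> Cset R M K"
definition "vec c \<longleftrightarrow> (\<forall>i<n. c i \<in> carrier R)"
definition "ev c = finsum M (\<lambda>i. smult M (c i) (s i)) {..<n}"
definition "emul c = (\<lambda>i. finsum R (\<lambda>k. e i k \<otimes>\<^bsub>R\<^esub> c k) {..<n})"
definition "rowf f c = finsum R (\<lambda>k. f (s k) \<otimes>\<^bsub>R\<^esub> c k) {..<n}"

lemma H_hom: "f \<in> H \<Longrightarrow> rhom R M (RR R) f"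
  unfolding Hset_def by (intro rhomI rm RR_rm ringR) auto

lemma H_K: "f \<in> H \<Longrightarrow> k \<in> K \<Longrightarrow> f k = \<zero>\<^bsub>R\<^esub>"
  unfolding Hset_def by auto

lemma H_closed: "f \<in> H \<Longrightarrow> x \<in> carrier M \<Longrightarrow> f x \<in> carrier R"
  using rhom.h_closed[OF H_hom] by fastforce

lemma ev_closed: "vec c \<Longrightarrow> ev c \<in> carrier M"
  unfolding ev_def vec_def using s by (intro lincomb_closed) auto

lemma emul_vec: "vec c \<Longrightarrow> vec (emul c)"
  unfolding vec_def emul_def using ecar by (auto intro!: R.finsum_closed)

lemma rowf_ev: "f \<in> H \<Longrightarrow> vec c \<Longrightarrow> f (ev c) = rowf f c"
proof -
  assume f: "f \<in> H" and c: "vec c"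
  interpret fh: rhom R M "RR R" f by (rule H_hom[OF f])
  have "f (ev c) = finsum (RR R) (\<lambda>i. f (smult M (c i) (s i))) {..<n}"
    unfolding ev_def by (rule fh.h_finsum) (use s c in \<open>auto simp: vec_def\<close>)
  also have "\<dots> = finsum R (\<lambda>i. f (smult M (c i) (s i))) {..<n}"
    by (simp add: finsum_def finprod_def RR_def)
  also have "\<dots> = rowf f c"
    unfolding rowf_def by (rule R.finsum_cong'[OF refl]) (use s c f H_closed in \<open>auto simp: vec_def fh.h_sm\<close>)
  finally show ?thesis .
qed

lemma ev_in_C: "vec c \<Longrightarrow> ev c \<in> C \<longleftrightarrow> (\<forall>f\<in>H. rowf f c = \<zero>\<^bsub>R\<^esub>)"
  unfolding Cset_def using ev_closed rowf_ev by auto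

lemma K_C: "K \<subseteq> C"
  unfolding Cset_def using sub H_K by (auto simp: submodule_def)

lemma C_sub: "submodule R M C"
  unfolding submodule_def
proof (intro conjI ballI)
  show "C \<subseteq> carrier M" unfolding Cset_def by auto
  show "\<zero>\<^bsub>M\<^esub> \<in> C" unfolding Cset_def using rhom.h_zero[OF H_hom] by auto
next
  fix x y assume x: "x \<in> C" and y: "y \<in> C"
  have "f (x \<oplus>\<^bsub>M\<^esub> y) = \<zero>\<^bsub>R\<^esub>" if f: "f \<in> H" for f
  proof -
    have "f (x \<oplus>\<^bsub>M\<^esub> y) = f x \<oplus>\<^bsub>R\<^esub> f y"
      using rhom.h_add[OF H_hom[OF f]] x y by (simp add: Cset_def)
    moreover have "f x = \<zero>\<^bsub>R\<^esub>" "f y = \<zero>\<^bsub>R\<^esub>" using x y f by (auto simp: Cset_def)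
    ultimately show ?thesis by simp
  qed
  then show "x \<oplus>\<^bsub>M\<^esub> y \<in> C" using x y unfolding Cset_def by auto
next
  fix x assume x: "x \<in> C"
  have "f (\<ominus>\<^bsub>M\<^esub> x) = \<zero>\<^bsub>R\<^esub>" if f: "f \<in> H" for f
  proof -
    have fx: "f x = \<zero>\<^bsub>R\<^esub>" "x \<in> carrier M" using x f by (auto simp: Cset_def)
    have "f (\<ominus>\<^bsub>M\<^esub> x) = \<ominus>\<^bsub>RR R\<^esub> f x" using rhom.h_neg[OF H_hom[OF f] fx(2)] .
    also have "\<dots> = \<ominus>\<^bsub>R\<^esub> \<zero>\<^bsub>R\<^esub>" using RR_a_inv[OF ringR, of "\<zero>\<^bsub>R\<^esub>"] fx by simp
    finally show ?thesis by simp
  qed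
  then show "\<ominus>\<^bsub>M\<^esub> x \<in> C" using x unfolding Cset_def by auto
next
  fix x r assume x: "x \<in> C" and r: "r \<in> carrier R"
  have "f (smult M r x) = \<zero>\<^bsub>R\<^esub>" if f: "f \<in> H" for f
  proof -
    have fx: "f x = \<zero>\<^bsub>R\<^esub>" "x \<in> carrier M" using x f by (auto simp: Cset_def)
    have "f (smult M r x) = f x \<otimes>\<^bsub>R\<^esub> r" using rhom.h_sm[OF H_hom[OF f] fx(2) r] by simp
    then show ?thesis using fx r by simp
  qed
  then show "smult M r x \<in> C" using x r unfolding Cset_def by auto
qed

lemma emul_cl: "vec c \<Longrightarrow> f \<in> H \<Longrightarrow> rowf f (emul c) = \<zero>\<^bsub>R\<^esub>"
proof -
  assume c: "vec c" and f: "f \<in> H"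
  have "rowf f (emul c) = finsum R (\<lambda>l. finsum R (\<lambda>k. f (s k) \<otimes>\<^bsub>R\<^esub> e k l) {..<n} \<otimes>\<^bsub>R\<^esub> c l) {..<n}"
    unfolding rowf_def emul_def
    by (rule R.sum_assoc) (use c f s ecar H_closed in \<open>auto simp: vec_def\<close>)
  also have "\<dots> = finsum R (\<lambda>l. \<zero>\<^bsub>R\<^esub>) {..<n}"
    by (rule R.finsum_cong'[OF refl]) (use c f eann in \<open>auto simp: vec_def\<close>)
  finally show ?thesis by simp
qed

lemma cl_fix:
  assumes c: "vec c" and cl: "\<forall>f\<in>H. rowf f c = \<zero>\<^bsub>R\<^esub>" and i: "i < n"
  shows "emul c i = c i"
proof -
  define X where "X = (\<lambda>i (j::nat). if j = 0 then c i else \<zero>\<^bsub>R\<^esub>)"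
  have Xc: "\<forall>i<n. \<forall>j<n. X i j \<in> carrier R" using c by (auto simp: X_def vec_def)
  have Xa: "\<forall>f\<in>H. \<forall>j<n. finsum R (\<lambda>k. f (s k) \<otimes>\<^bsub>R\<^esub> X k j) {..<n} = \<zero>\<^bsub>R\<^esub>"
  proof (intro ballI allI impI)
    fix f j assume f: "f \<in> H" and j: "j < n"
    show "finsum R (\<lambda>k. f (s k) \<otimes>\<^bsub>R\<^esub> X k j) {..<n} = \<zero>\<^bsub>R\<^esub>"
    proof (cases "j = 0")
      case True then show ?thesis using cl f by (simp add: X_def rowf_def)
    next
      case False
      then have "finsum R (\<lambda>k. f (s k) \<otimes>\<^bsub>R\<^esub> X k j) {..<n} = finsum R (\<lambda>k. \<zero>\<^bsub>R\<^esub>) {..<n}"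
        by (intro R.finsum_cong'[OF refl]) (use f s H_closed in \<open>auto simp: X_def\<close>)
      then show ?thesis by simp
    qed
  qed
  obtain Y where Y: "\<forall>i<n. \<forall>j<n. Y i j \<in> carrier R"
    "\<forall>i<n. \<forall>j<n. X i j = finsum R (\<lambda>k. e i k \<otimes>\<^bsub>R\<^esub> Y k j) {..<n}"
    using ecl[rule_format, OF conjI[OF Xc Xa]] by blast
  have n0: "0 < n" using i by simp
  have "emul c i = finsum R (\<lambda>k. e i k \<otimes>\<^bsub>R\<^esub> X k 0) {..<n}"
    unfolding emul_def X_def by simp
  also have "\<dots> = finsum R (\<lambda>k. e i k \<otimes>\<^bsub>R\<^esub> finsum R (\<lambda>l. e k l \<otimes>\<^bsub>R\<^esub> Y l 0) {..<n}) {..<n}"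
    by (rule R.finsum_cong'[OF refl]) (use Y n0 i ecar in \<open>auto intro!: R.finsum_closed\<close>)
  also have "\<dots> = finsum R (\<lambda>l. finsum R (\<lambda>k. e i k \<otimes>\<^bsub>R\<^esub> e k l) {..<n} \<otimes>\<^bsub>R\<^esub> Y l 0) {..<n}"
    by (rule R.sum_assoc) (use Y n0 i ecar in auto)
  also have "\<dots> = finsum R (\<lambda>l. e i l \<otimes>\<^bsub>R\<^esub> Y l 0) {..<n}"
    by (rule R.finsum_cong'[OF refl]) (use Y n0 i ecar eidem in auto)
  also have "\<dots> = X i 0" using Y n0 i by simp
  also have "\<dots> = c i" by (simp add: X_def)
  finally show ?thesis .
qed

end

lemma (in ring) minus_zero_eq: "a \<in> carrier R \<Longrightarrow> b \<in> carrier R \<Longrightarrow> a \<ominus> b = \<zero> \<Longrightarrow> a = b"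
proof -
  assume a: "a \<in> carrier R" and b: "b \<in> carrier R" and h: "a \<ominus> b = \<zero>"
  have "a = (a \<ominus> b) \<oplus> b" using a b by (simp add: minus_eq a_assoc l_neg)
  then show "a = b" using h b by simp
qed

context coreloc begin

lemma vec_add: "vec c \<Longrightarrow> vec d \<Longrightarrow> vec (\<lambda>i. c i \<oplus>\<^bsub>R\<^esub> d i)" by (auto simp: vec_def)
lemma vec_sm: "vec c \<Longrightarrow> r \<in> carrier R \<Longrightarrow> vec (\<lambda>i. c i \<otimes>\<^bsub>R\<^esub> r)" by (auto simp: vec_def)
lemma vec_minus: "vec c \<Longrightarrow> vec d \<Longrightarrow> vec (\<lambda>i. c i \<ominus>\<^bsub>R\<^esub> d i)" by (auto simp: vec_def)

lemma ev_add: "vec c \<Longrightarrow> vec d \<Longrightarrow> ev (\<lambda>i. c i \<oplus>\<^bsub>R\<^esub> d i) = ev c \<oplus>\<^bsub>M\<^esub> ev d"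
  unfolding ev_def vec_def using lc_add s by simp
lemma ev_sm: "vec c \<Longrightarrow> r \<in> carrier R \<Longrightarrow> ev (\<lambda>i. c i \<otimes>\<^bsub>R\<^esub> r) = smult M r (ev c)"
  unfolding ev_def vec_def using lc_sm s by simp
lemma ev_neg: "vec d \<Longrightarrow> ev (\<lambda>i. \<ominus>\<^bsub>R\<^esub> d i) = \<ominus>\<^bsub>M\<^esub> ev d"
proof -
  assume d: "vec d"
  have "ev (\<lambda>i. \<ominus>\<^bsub>R\<^esub> d i) = ev (\<lambda>i. d i \<otimes>\<^bsub>R\<^esub> (\<ominus>\<^bsub>R\<^esub> \<one>\<^bsub>R\<^esub>))"
    unfolding ev_def by (rule M.finsum_cong'[OF refl]) (use d s in \<open>auto simp: vec_def R.r_minus\<close>)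
  also have "\<dots> = smult M (\<ominus>\<^bsub>R\<^esub> \<one>\<^bsub>R\<^esub>) (ev d)" by (rule ev_sm[OF d]) simp
  also have "\<dots> = \<ominus>\<^bsub>M\<^esub> ev d" using ev_closed[OF d] by (simp add: sm_neg_l)
  finally show ?thesis .
qed
lemma ev_minus: "vec c \<Longrightarrow> vec d \<Longrightarrow> ev (\<lambda>i. c i \<ominus>\<^bsub>R\<^esub> d i) = ev c \<ominus>\<^bsub>M\<^esub> ev d"
proof -
  assume c: "vec c" and d: "vec d"
  have nd: "vec (\<lambda>i. \<ominus>\<^bsub>R\<^esub> d i)" using d by (auto simp: vec_def)
  have "ev (\<lambda>i. c i \<ominus>\<^bsub>R\<^esub> d i) = ev (\<lambda>i. c i \<oplus>\<^bsub>R\<^esub> (\<ominus>\<^bsub>R\<^esub> d i))" by (simp add: R.minus_eq)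
  also have "\<dots> = ev c \<oplus>\<^bsub>M\<^esub> ev (\<lambda>i. \<ominus>\<^bsub>R\<^esub> d i)" by (rule ev_add[OF c nd])
  finally show ?thesis by (simp add: ev_neg[OF d] M.minus_eq)
qed

lemma emul_add: "vec c \<Longrightarrow> vec d \<Longrightarrow> i < n \<Longrightarrow> emul (\<lambda>i. c i \<oplus>\<^bsub>R\<^esub> d i) i = emul c i \<oplus>\<^bsub>R\<^esub> emul d i"
proof -
  assume c: "vec c" and d: "vec d" and i: "i < n"
  have "emul (\<lambda>i. c i \<oplus>\<^bsub>R\<^esub> d i) i = finsum R (\<lambda>k. e i k \<otimes>\<^bsub>R\<^esub> c k \<oplus>\<^bsub>R\<^esub> e i k \<otimes>\<^bsub>R\<^esub> d k) {..<n}"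
    unfolding emul_def by (rule R.finsum_cong'[OF refl]) (use c d i ecar in \<open>auto simp: vec_def R.r_distr\<close>)
  also have "\<dots> = emul c i \<oplus>\<^bsub>R\<^esub> emul d i"
    unfolding emul_def by (rule R.finsum_addf) (use c d i ecar in \<open>auto simp: vec_def\<close>)
  finally show ?thesis .
qed

lemma emul_sm: "vec c \<Longrightarrow> r \<in> carrier R \<Longrightarrow> i < n \<Longrightarrow> emul (\<lambda>i. c i \<otimes>\<^bsub>R\<^esub> r) i = emul c i \<otimes>\<^bsub>R\<^esub> r"
proof -
  assume c: "vec c" and r: "r \<in> carrier R" and i: "i < n"
  have "emul (\<lambda>i. c i \<otimes>\<^bsub>R\<^esub> r) i = finsum R (\<lambda>k. e i k \<otimes>\<^bsub>R\<^esub> c k \<otimes>\<^bsub>R\<^esub> r) {..<n}"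
    unfolding emul_def by (rule R.finsum_cong'[OF refl]) (use c r i ecar in \<open>auto simp: vec_def R.m_assoc\<close>)
  also have "\<dots> = emul c i \<otimes>\<^bsub>R\<^esub> r"
    unfolding emul_def by (rule R.finsum_ldistr[symmetric]) (use c r i ecar in \<open>auto simp: vec_def\<close>)
  finally show ?thesis .
qed

lemma emul_closed: "vec c \<Longrightarrow> i < n \<Longrightarrow> emul c i \<in> carrier R"
  using emul_vec vec_def by blast

lemma emul_neg: "vec d \<Longrightarrow> i < n \<Longrightarrow> emul (\<lambda>i. \<ominus>\<^bsub>R\<^esub> d i) i = \<ominus>\<^bsub>R\<^esub> emul d i"
proof -
  assume d: "vec d" and i: "i < n"
  have "emul (\<lambda>i. \<ominus>\<^bsub>R\<^esub> d i) i = emul (\<lambda>i. d i \<otimes>\<^bsub>R\<^esub> (\<ominus>\<^bsub>R\<^esub> \<one>\<^bsub>R\<^esub>)) i"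
    unfolding emul_def by (rule R.finsum_cong'[OF refl]) (use d i ecar in \<open>auto simp: vec_def R.r_minus\<close>)
  also have "\<dots> = emul d i \<otimes>\<^bsub>R\<^esub> (\<ominus>\<^bsub>R\<^esub> \<one>\<^bsub>R\<^esub>)" by (rule emul_sm[OF d _ i]) simp
  also have "\<dots> = \<ominus>\<^bsub>R\<^esub> emul d i" using emul_closed[OF d i] by (simp add: R.r_minus)
  finally show ?thesis .
qed

lemma emul_minus: "vec c \<Longrightarrow> vec d \<Longrightarrow> i < n \<Longrightarrow> emul (\<lambda>i. c i \<ominus>\<^bsub>R\<^esub> d i) i = emul c i \<ominus>\<^bsub>R\<^esub> emul d i"
proof -
  assume c: "vec c" and d: "vec d" and i: "i < n"
  have nd: "vec (\<lambda>i. \<ominus>\<^bsub>R\<^esub> d i)" using d by (auto simp: vec_def)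
  have "emul (\<lambda>i. c i \<ominus>\<^bsub>R\<^esub> d i) i = emul (\<lambda>i. c i \<oplus>\<^bsub>R\<^esub> (\<ominus>\<^bsub>R\<^esub> d i)) i" by (simp add: R.minus_eq)
  also have "\<dots> = emul c i \<oplus>\<^bsub>R\<^esub> emul (\<lambda>i. \<ominus>\<^bsub>R\<^esub> d i) i" by (rule emul_add[OF c nd i])
  finally show ?thesis by (simp add: emul_neg[OF d i] R.minus_eq)
qed

lemma C_fix: "vec c \<Longrightarrow> ev c \<in> C \<Longrightarrow> i < n \<Longrightarrow> emul c i = c i"
  using cl_fix ev_in_C by blast

lemma emul_C: "vec c \<Longrightarrow> ev (emul c) \<in> C"
  using emul_cl ev_in_C emul_vec by blast

definition "rep x = (SOME c. vec c \<and> x = ev c)"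
definition "g i x = rep x i \<ominus>\<^bsub>R\<^esub> emul (rep x) i"

lemma rep: "x \<in> carrier M \<Longrightarrow> vec (rep x) \<and> x = ev (rep x)"
proof -
  assume x: "x \<in> carrier M"
  have "\<exists>c. vec c \<and> x = ev c" using span x unfolding vec_def ev_def by blast
  then show ?thesis unfolding rep_def by (rule someI_ex)
qed

lemma g_indep:
  assumes c: "vec c" and i: "i < n"
  shows "g i (ev c) = c i \<ominus>\<^bsub>R\<^esub> emul c i"
proof -
  define d where "d = rep (ev c)"
  have d: "vec d" "ev c = ev d" using rep[OF ev_closed[OF c]] by (auto simp: d_def)
  have "ev (\<lambda>i. c i \<ominus>\<^bsub>R\<^esub> d i) = \<zero>\<^bsub>M\<^esub>" using ev_minus[OF c d(1)] d(2) ev_closed[OF c]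
    by (simp add: M.r_neg M.minus_eq)
  then have "ev (\<lambda>i. c i \<ominus>\<^bsub>R\<^esub> d i) \<in> C" using C_sub by (simp add: submodule_def)
  then have "emul (\<lambda>i. c i \<ominus>\<^bsub>R\<^esub> d i) i = c i \<ominus>\<^bsub>R\<^esub> d i" using C_fix vec_minus[OF c d(1)] i by simp
  then have h: "emul c i \<ominus>\<^bsub>R\<^esub> emul d i = c i \<ominus>\<^bsub>R\<^esub> d i" using emul_minus[OF c d(1) i] by simp
  have cc: "c i \<in> carrier R" "d i \<in> carrier R" "emul c i \<in> carrier R" "emul d i \<in> carrier R"
    using c d(1) i emul_closed by (auto simp: vec_def)
  have "(c i \<ominus>\<^bsub>R\<^esub> emul c i) \<ominus>\<^bsub>R\<^esub> (d i \<ominus>\<^bsub>R\<^esub> emul d i) = (c i \<ominus>\<^bsub>R\<^esub> d i) \<ominus>\<^bsub>R\<^esub> (emul c i \<ominus>\<^bsub>R\<^esub> emul d i)"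
    using cc by (simp add: R.ring_simprules)
  also have "\<dots> = \<zero>\<^bsub>R\<^esub>" using h cc by (simp add: R.minus_eq R.r_neg)
  finally have "c i \<ominus>\<^bsub>R\<^esub> emul c i = d i \<ominus>\<^bsub>R\<^esub> emul d i"
    by (rule R.minus_zero_eq[rotated 2]) (use cc in auto)
  then show ?thesis by (simp add: g_def d_def)
qed

lemma g_hom: "i < n \<Longrightarrow> g i \<in> H"
proof -
  assume i: "i < n"
  have gc: "g i x \<in> carrier R" if "x \<in> carrier M" for x
    using rep[OF that] i emul_closed by (auto simp: g_def vec_def)
  have hom: "module_hom R M (RR R) (g i)"
    unfolding module_hom_def
  proof (intro conjI ballI)
    fix x assume "x \<in> carrier M" then show "g i x \<in> carrier (RR R)" using gc by simp
  next
    fix x y assume x: "x \<in> carrier M" and y: "y \<in> carrier M"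
    obtain c d where c: "vec c" "x = ev c" and d: "vec d" "y = ev d" using rep x y by blast
    have xy: "x \<oplus>\<^bsub>M\<^esub> y = ev (\<lambda>i. c i \<oplus>\<^bsub>R\<^esub> d i)" using ev_add[OF c(1) d(1)] c d by simp
    have cc: "c i \<in> carrier R" "d i \<in> carrier R" "emul c i \<in> carrier R" "emul d i \<in> carrier R"
      using c d i emul_closed by (auto simp: vec_def)
    have "g i (x \<oplus>\<^bsub>M\<^esub> y) = (c i \<oplus>\<^bsub>R\<^esub> d i) \<ominus>\<^bsub>R\<^esub> (emul c i \<oplus>\<^bsub>R\<^esub> emul d i)"
      unfolding xy g_indep[OF vec_add[OF c(1) d(1)] i] emul_add[OF c(1) d(1) i] by simp
    also have "\<dots> = (c i \<ominus>\<^bsub>R\<^esub> emul c i) \<oplus>\<^bsub>R\<^esub> (d i \<ominus>\<^bsub>R\<^esub> emul d i)"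
      using cc by (simp add: R.ring_simprules)
    also have "\<dots> = g i x \<oplus>\<^bsub>RR R\<^esub> g i y" using g_indep c d i by simp
    finally show "g i (x \<oplus>\<^bsub>M\<^esub> y) = g i x \<oplus>\<^bsub>RR R\<^esub> g i y" .
  next
    fix x r assume x: "x \<in> carrier M" and r: "r \<in> carrier R"
    obtain c where c: "vec c" "x = ev c" using rep x by blast
    have xr: "smult M r x = ev (\<lambda>i. c i \<otimes>\<^bsub>R\<^esub> r)" using ev_sm[OF c(1) r] c by simp
    have cc: "c i \<in> carrier R" "emul c i \<in> carrier R"
      using c i emul_closed by (auto simp: vec_def)
    have "g i (smult M r x) = c i \<otimes>\<^bsub>R\<^esub> r \<ominus>\<^bsub>R\<^esub> emul c i \<otimes>\<^bsub>R\<^esub> r"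
      unfolding xr g_indep[OF vec_sm[OF c(1) r] i] emul_sm[OF c(1) r i] by simp
    also have "\<dots> = (c i \<ominus>\<^bsub>R\<^esub> emul c i) \<otimes>\<^bsub>R\<^esub> r"
      using cc r by (simp add: R.ring_simprules)
    also have "\<dots> = smult (RR R) r (g i x)" using g_indep c i by simp
    finally show "g i (smult M r x) = smult (RR R) r (g i x)" .
  qed
  have kill: "g i k = \<zero>\<^bsub>R\<^esub>" if k: "k \<in> K" for k
  proof -
    have kc: "k \<in> carrier M" "k \<in> C" using k K_C sub by (auto simp: submodule_def)
    obtain c where c: "vec c" "k = ev c" using rep kc by blast
    have "emul c i = c i" using C_fix c kc i by simp
    then show ?thesis using g_indep[OF c(1) i] c i by (simp add: vec_def R.minus_eq R.r_neg)
  qed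
  show ?thesis unfolding Hset_def using hom kill by simp
qed

lemma core_decomp: "x \<in> carrier M \<Longrightarrow> x \<ominus>\<^bsub>M\<^esub> finsum M (\<lambda>i. smult M (g i x) (s i)) {..<n} \<in> C"
proof -
  assume x: "x \<in> carrier M"
  obtain c where c: "vec c" "x = ev c" "rep x = c" using rep[OF x] by blast
  have "finsum M (\<lambda>i. smult M (g i x) (s i)) {..<n} = ev (\<lambda>i. c i \<ominus>\<^bsub>R\<^esub> emul c i)"
    unfolding ev_def g_def c(3) ..
  also have "\<dots> = x \<ominus>\<^bsub>M\<^esub> ev (emul c)" using ev_minus[OF c(1) emul_vec[OF c(1)]] c by simp
  finally have eq: "finsum M (\<lambda>i. smult M (g i x) (s i)) {..<n} = x \<ominus>\<^bsub>M\<^esub> ev (emul c)" .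
  have w: "ev (emul c) \<in> carrier M" using ev_closed emul_vec c by blast
  have "x \<ominus>\<^bsub>M\<^esub> (x \<ominus>\<^bsub>M\<^esub> ev (emul c)) = ev (emul c)"
    using x w by (simp add: M.minus_eq M.minus_add M.minus_minus M.r_neg1 M.a_assoc[symmetric] M.r_neg M.l_zero)
  then show ?thesis unfolding eq using emul_C[OF c(1)] by simp
qed

theorem core_result:
  "\<exists>t g. (\<forall>i<n. t i \<in> carrier M) \<and> (\<forall>i<n. g i \<in> H) \<and>
     (\<forall>x\<in>carrier M. x \<ominus>\<^bsub>M\<^esub> finsum M (\<lambda>i. smult M (g i x) (t i)) {..<n} \<in> C)"
  using s g_hom core_decomp by blast

end

lemma matring_simps: "carrier (matring R n) = {A. \<forall>i j. (i < n \<and> j < n \<longrightarrow> A i j \<in> carrier R) \<and>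
                                      (\<not> (i < n \<and> j < n) \<longrightarrow> A i j = \<zero>\<^bsub>R\<^esub>)}"
  "mult (matring R n) A B = (\<lambda>i j. if i < n \<and> j < n then (\<Oplus>\<^bsub>R\<^esub> k\<in>{..<n}. A i k \<otimes>\<^bsub>R\<^esub> B k j) else \<zero>\<^bsub>R\<^esub>)"
  "zero (matring R n) = (\<lambda>i j. \<zero>\<^bsub>R\<^esub>)"
  by (simp_all add: matring_def)

context rmod begin

lemma core_final:
  assumes fg: "fin_gen R M" and sub: "submodule R M K" and baer: "\<forall>n\<ge>1. baer_ring (matring R n)"
  shows "\<exists>n t g. (\<forall>i<(n::nat). t i \<in> carrier M) \<and> (\<forall>i<n. g i \<in> Hset R M K) \<and>
     (\<forall>x\<in>carrier M. x \<ominus>\<^bsub>M\<^esub> finsum M (\<lambda>i. smult M (g i x) (t i)) {..<n} \<in> Cset R M K)"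
proof -
  obtain n :: nat and s where n: "n \<ge> 1" and s: "\<forall>i<n. s i \<in> carrier M"
    and span: "\<forall>x\<in>carrier M. \<exists>c. (\<forall>i<n. c i \<in> carrier R) \<and> x = finsum M (\<lambda>i. smult M (c i) (s i)) {..<n}"
    using fin_gen_elim[OF fg] by blast
  let ?A = "matring R n"
  let ?H = "Hset R M K"
  have Hc: "f x \<in> carrier R" if "f \<in> ?H" "x \<in> carrier M" for f x
    using that unfolding Hset_def module_hom_def by auto
  define Sf where "Sf f = (\<lambda>i j. if i < n \<and> j < n then f (s j) else \<zero>\<^bsub>R\<^esub>)" for f :: "'m \<Rightarrow> 'a"
  define S where "S = Sf ` ?H"
  have Scar: "S \<subseteq> carrier ?A" unfolding S_def Sf_def matring_simps using Hc s by auto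
  obtain e where e: "e \<in> carrier ?A" "e \<otimes>\<^bsub>?A\<^esub> e = e"
    and ann: "{x \<in> carrier ?A. \<forall>t\<in>S. t \<otimes>\<^bsub>?A\<^esub> x = \<zero>\<^bsub>?A\<^esub>} = {e \<otimes>\<^bsub>?A\<^esub> r | r. r \<in> carrier ?A}"
    using baer n Scar unfolding baer_ring_def by blast
  have ecar: "\<forall>i<n. \<forall>j<n. e i j \<in> carrier R" using e(1) by (simp add: matring_simps)
  have eidem: "\<forall>i<n. \<forall>j<n. finsum R (\<lambda>k. e i k \<otimes>\<^bsub>R\<^esub> e k j) {..<n} = e i j"
  proof (intro allI impI)
    fix i j assume "i < n" "j < n"
    then show "finsum R (\<lambda>k. e i k \<otimes>\<^bsub>R\<^esub> e k j) {..<n} = e i j"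
      using fun_cong[OF fun_cong[OF e(2)], of i j] by (simp add: matring_simps)
  qed
  have prodS: "(Sf f \<otimes>\<^bsub>?A\<^esub> X) 0 j = finsum R (\<lambda>k. f (s k) \<otimes>\<^bsub>R\<^esub> X k j) {..<n}"
    if "j < n" "f \<in> ?H" "\<forall>k<n. X k j \<in> carrier R" for f X j
  proof -
    have "(Sf f \<otimes>\<^bsub>?A\<^esub> X) 0 j = finsum R (\<lambda>k. Sf f 0 k \<otimes>\<^bsub>R\<^esub> X k j) {..<n}"
      using that n by (simp add: matring_simps)
    also have "\<dots> = finsum R (\<lambda>k. f (s k) \<otimes>\<^bsub>R\<^esub> X k j) {..<n}"
      using n that Hc s by (intro R.finsum_cong) (auto simp: Sf_def)
    finally show ?thesis .
  qed
  have eann: "\<forall>f\<in>?H. \<forall>j<n. finsum R (\<lambda>k. f (s k) \<otimes>\<^bsub>R\<^esub> e k j) {..<n} = \<zero>\<^bsub>R\<^esub>"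
  proof (intro ballI allI impI)
    fix f j assume f: "f \<in> ?H" and j: "j < n"
    have "e \<in> {e \<otimes>\<^bsub>?A\<^esub> r | r. r \<in> carrier ?A}" using e by force
    then have "Sf f \<otimes>\<^bsub>?A\<^esub> e = \<zero>\<^bsub>?A\<^esub>" using ann f unfolding S_def by blast
    then have "(Sf f \<otimes>\<^bsub>?A\<^esub> e) 0 j = \<zero>\<^bsub>R\<^esub>" by (simp add: matring_simps)
    then show "finsum R (\<lambda>k. f (s k) \<otimes>\<^bsub>R\<^esub> e k j) {..<n} = \<zero>\<^bsub>R\<^esub>" using prodS[OF j f] ecar j by simp
  qed
  have ecl: "\<forall>X. (\<forall>i<n. \<forall>j<n. X i j \<in> carrier R) \<and>
                 (\<forall>f\<in>?H. \<forall>j<n. finsum R (\<lambda>k. f (s k) \<otimes>\<^bsub>R\<^esub> X k j) {..<n} = \<zero>\<^bsub>R\<^esub>) \<longrightarrow>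
              (\<exists>Y. (\<forall>i<n. \<forall>j<n. Y i j \<in> carrier R) \<and>
                   (\<forall>i<n. \<forall>j<n. X i j = finsum R (\<lambda>k. e i k \<otimes>\<^bsub>R\<^esub> Y k j) {..<n}))"
  proof (intro allI impI)
    fix X assume X: "(\<forall>i<n. \<forall>j<n. X i j \<in> carrier R) \<and>
                 (\<forall>f\<in>?H. \<forall>j<n. finsum R (\<lambda>k. f (s k) \<otimes>\<^bsub>R\<^esub> X k j) {..<n} = \<zero>\<^bsub>R\<^esub>)"
    define X' where "X' = (\<lambda>i j. if i < n \<and> j < n then X i j else \<zero>\<^bsub>R\<^esub>)"
    have X'c: "X' \<in> carrier ?A" using X by (auto simp: X'_def matring_simps)
    have "Sf f \<otimes>\<^bsub>?A\<^esub> X' = \<zero>\<^bsub>?A\<^esub>" if f: "f \<in> ?H" for f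
    proof (intro ext)
      fix i j
      show "(Sf f \<otimes>\<^bsub>?A\<^esub> X') i j = \<zero>\<^bsub>?A\<^esub> i j"
      proof (cases "i < n \<and> j < n")
        case True
        have "(Sf f \<otimes>\<^bsub>?A\<^esub> X') i j = finsum R (\<lambda>k. Sf f i k \<otimes>\<^bsub>R\<^esub> X' k j) {..<n}"
          using True by (simp add: matring_simps)
        also have "\<dots> = finsum R (\<lambda>k. f (s k) \<otimes>\<^bsub>R\<^esub> X k j) {..<n}"
          by (rule R.finsum_cong) (use True X f Hc s in \<open>auto simp: Sf_def X'_def\<close>)
        also have "\<dots> = \<zero>\<^bsub>R\<^esub>" using X f True by blast
        finally show ?thesis by (simp add: matring_simps)
      next
        case False then show ?thesis by (auto simp: matring_simps)
      qed
    qed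
    then have "X' \<in> {x \<in> carrier ?A. \<forall>t\<in>S. t \<otimes>\<^bsub>?A\<^esub> x = \<zero>\<^bsub>?A\<^esub>}" using X'c unfolding S_def by blast
    then obtain Y where Y: "Y \<in> carrier ?A" "X' = e \<otimes>\<^bsub>?A\<^esub> Y" using ann by blast
    show "\<exists>Y. (\<forall>i<n. \<forall>j<n. Y i j \<in> carrier R) \<and>
                   (\<forall>i<n. \<forall>j<n. X i j = finsum R (\<lambda>k. e i k \<otimes>\<^bsub>R\<^esub> Y k j) {..<n})"
    proof (intro exI[of _ Y] conjI allI impI)
      fix i j assume "i < n" "j < n"
      then show "Y i j \<in> carrier R" using Y(1) by (simp add: matring_simps)
    next
      fix i j assume ij: "i < n" "j < n"
      have "X i j = X' i j" using ij by (simp add: X'_def)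
      also have "\<dots> = finsum R (\<lambda>k. e i k \<otimes>\<^bsub>R\<^esub> Y k j) {..<n}" using Y(2) ij by (simp add: matring_simps)
      finally show "X i j = finsum R (\<lambda>k. e i k \<otimes>\<^bsub>R\<^esub> Y k j) {..<n}" .
    qed
  qed
  interpret cl: coreloc R M K n s e
    by (unfold_locales) (use sub s span ecar eidem eann ecl in auto)
  show ?thesis using cl.core_result by blast
qed

end

lemma (in abelian_group) minus_zero_eq': "a \<in> carrier G \<Longrightarrow> b \<in> carrier G \<Longrightarrow> a \<ominus> b = \<zero> \<Longrightarrow> a = b"
proof -
  assume a: "a \<in> carrier G" and b: "b \<in> carrier G" and h: "a \<ominus> b = \<zero>"
  have "a = (a \<ominus> b) \<oplus> b" using a b by (simp add: minus_eq a_assoc l_neg)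
  then show "a = b" using h b by simp
qed

context rquot begin

lemma rep_coset:
  assumes x: "x \<in> carrier M"
  shows "(SOME a. a \<in> K +>\<^bsub>M\<^esub> x) \<in> carrier M \<and> (SOME a. a \<in> K +>\<^bsub>M\<^esub> x) \<ominus>\<^bsub>M\<^esub> x \<in> K"
proof -
  interpret S: abelian_subgroup K M by (rule asub)
  have "(SOME a. a \<in> K +>\<^bsub>M\<^esub> x) \<in> K +>\<^bsub>M\<^esub> x" using S.a_rcos_self[OF x] by (rule someI)
  then show ?thesis using S.a_elemrcos_carrier[OF x] S.a_rcos_module_imp[OF x] by (auto simp: a_minus_def)
qed

lemma induced_hom:
  assumes N: "right_module R N" and f: "module_hom R M N f" and kill: "\<forall>k\<in>K. f k = \<zero>\<^bsub>N\<^esub>"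
  shows "module_hom R Q N (\<lambda>A. f (SOME a. a \<in> A))"
    and "\<And>x. x \<in> carrier M \<Longrightarrow> f (SOME a. a \<in> K +>\<^bsub>M\<^esub> x) = f x"
proof -
  interpret fh: rhom R M N f by (intro rhomI rm N f)
  show ev: "f (SOME a. a \<in> K +>\<^bsub>M\<^esub> x) = f x" if x: "x \<in> carrier M" for x
  proof -
    obtain a where a: "a = (SOME a. a \<in> K +>\<^bsub>M\<^esub> x)" by simp
    have ac: "a \<in> carrier M" "a \<ominus>\<^bsub>M\<^esub> x \<in> K" using rep_coset[OF x] a by auto
    have "f a \<ominus>\<^bsub>N\<^esub> f x = \<zero>\<^bsub>N\<^esub>" using fh.h_minus[OF ac(1) x] kill ac by simp
    then have "f a = f x" by (rule fh.N.M.minus_zero_eq'[OF fh.h_closed[OF ac(1)] fh.h_closed[OF x]])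
    then show ?thesis using a by simp
  qed
  show "module_hom R Q N (\<lambda>A. f (SOME a. a \<in> A))"
    unfolding module_hom_def
  proof (intro conjI ballI)
    fix A assume "A \<in> carrier Q"
    then obtain x where x: "x \<in> carrier M" "A = K +>\<^bsub>M\<^esub> x" by (auto simp: Q_carrier)
    show "f (SOME a. a \<in> A) \<in> carrier N" using ev x by simp
  next
    fix A B assume "A \<in> carrier Q" "B \<in> carrier Q"
    then obtain x y where x: "x \<in> carrier M" "A = K +>\<^bsub>M\<^esub> x" and y: "y \<in> carrier M" "B = K +>\<^bsub>M\<^esub> y"
      by (auto simp: Q_carrier)
    show "f (SOME a. a \<in> A \<oplus>\<^bsub>Q\<^esub> B) = f (SOME a. a \<in> A) \<oplus>\<^bsub>N\<^esub> f (SOME a. a \<in> B)"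
      using x y by (simp add: Q_add ev fh.h_add)
  next
    fix A r assume "A \<in> carrier Q" "r \<in> carrier R"
    then obtain x where x: "x \<in> carrier M" "A = K +>\<^bsub>M\<^esub> x" and r: "r \<in> carrier R" by (auto simp: Q_carrier)
    show "f (SOME a. a \<in> smult Q r A) = smult N r (f (SOME a. a \<in> A))"
      using x r by (simp add: Q_sm ev fh.h_sm)
  qed
qed

lemma Q_fin_gen: "fin_gen R M \<Longrightarrow> fin_gen R Q"
proof -
  assume fg: "fin_gen R M"
  obtain n :: nat and s where "n \<ge> 1" and s: "\<forall>i<n. s i \<in> carrier M"
    and span: "\<forall>x\<in>carrier M. \<exists>c. (\<forall>i<n. c i \<in> carrier R) \<and> x = finsum M (\<lambda>i. smult M (c i) (s i)) {..<n}"
    by (rule fin_gen_elim[OF fg])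
  interpret qh: rhom R M Q "\<lambda>x. K +>\<^bsub>M\<^esub> x" by (rule qmap_rhom)
  show ?thesis
  proof (rule Qm.fin_gen_intro[of n "\<lambda>i. K +>\<^bsub>M\<^esub> s i"])
    show "\<forall>i<n. K +>\<^bsub>M\<^esub> s i \<in> carrier Q" using s by auto
    show "\<forall>x\<in>carrier Q. \<exists>c. (\<forall>i<n. c i \<in> carrier R) \<and>
        x = finsum Q (\<lambda>i. smult Q (c i) (K +>\<^bsub>M\<^esub> s i)) {..<n}"
    proof
      fix A assume "A \<in> carrier Q"
      then obtain x where x: "x \<in> carrier M" "A = K +>\<^bsub>M\<^esub> x" by (auto simp: Q_carrier)
      obtain c where c: "\<forall>i<n. c i \<in> carrier R" "x = finsum M (\<lambda>i. smult M (c i) (s i)) {..<n}"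
        using span x by blast
      have "A = K +>\<^bsub>M\<^esub> finsum M (\<lambda>i. smult M (c i) (s i)) {..<n}" using x c by simp
      also have "\<dots> = finsum Q (\<lambda>i. K +>\<^bsub>M\<^esub> smult M (c i) (s i)) {..<n}"
        by (rule qh.h_finsum) (use c s in auto)
      also have "\<dots> = finsum Q (\<lambda>i. smult Q (c i) (K +>\<^bsub>M\<^esub> s i)) {..<n}"
        by (rule Qm.M.finsum_cong'[OF refl]) (use c s in \<open>auto simp: Q_sm\<close>)
      finally show "\<exists>c. (\<forall>i<n. c i \<in> carrier R) \<and> A = finsum Q (\<lambda>i. smult Q (c i) (K +>\<^bsub>M\<^esub> s i)) {..<n}"
        using c by blast
    qed
  qed
qed

end

context rmod begin

lemma finsum_restrict:
  assumes "D \<subseteq> carrier M" "submodule R M D" "finite A" "f \<in> A \<rightarrow> D"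
  shows "finsum (M\<lparr>carrier := D\<rparr>) f A = finsum M f A"
proof -
  interpret N: rmod R "M\<lparr>carrier := D\<rparr>" by (intro rmodI submodule_restrict assms(2))
  show ?thesis using assms(3,4)
  proof (induct A rule: finite_induct)
    case empty then show ?case by simp
  next
    case (insert x F)
    have "finsum (M\<lparr>carrier := D\<rparr>) f (insert x F) = f x \<oplus>\<^bsub>M\<^esub> finsum (M\<lparr>carrier := D\<rparr>) f F"
      using insert by (subst N.M.finsum_insert) auto
    also have "\<dots> = finsum M f (insert x F)"
      using insert assms(1) by (subst M.finsum_insert) (auto simp: Pi_def subset_iff)
    finally show ?case .
  qed
qed

end

locale splitloc = rmod R M for R :: "'a ring" and M :: "('a,'m) module" +
  fixes C :: "'m set" and n :: nat and t :: "nat \<Rightarrow> 'm" and g :: "nat \<Rightarrow> 'm \<Rightarrow> 'a"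
  assumes Csub: "submodule R M C"
    and t: "\<forall>i<n. t i \<in> carrier M"
    and g: "\<forall>i<n. module_hom R M (RR R) (g i)"
    and gC: "\<forall>i<n. \<forall>c\<in>C. g i c = \<zero>\<^bsub>R\<^esub>"
    and dec: "\<forall>x\<in>carrier M. x \<ominus>\<^bsub>M\<^esub> finsum M (\<lambda>i. smult M (g i x) (t i)) {..<n} \<in> C"
begin

definition "E x = finsum M (\<lambda>i. smult M (g i x) (t i)) {..<n}"

sublocale RRm: rmod R "RR R" by (intro rmodI RR_rm ringR)

lemma g_rhom: "i < n \<Longrightarrow> rhom R M (RR R) (g i)"
  using g by (intro rhomI rm RR_rm ringR) auto

lemma gc: "i < n \<Longrightarrow> x \<in> carrier M \<Longrightarrow> g i x \<in> carrier R"
  using rhom.h_closed[OF g_rhom] by fastforce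

lemma C_carr: "C \<subseteq> carrier M" using Csub by (simp add: submodule_def)

lemma E_closed: "x \<in> carrier M \<Longrightarrow> E x \<in> carrier M"
  unfolding E_def using t gc by (intro lincomb_closed) auto

lemma E_hom: "module_hom R M M E"
  unfolding module_hom_def
proof (intro conjI ballI)
  fix x assume "x \<in> carrier M" then show "E x \<in> carrier M" by (rule E_closed)
next
  fix x y assume x: "x \<in> carrier M" and y: "y \<in> carrier M"
  have "E (x \<oplus>\<^bsub>M\<^esub> y) = finsum M (\<lambda>i. smult M (g i x \<oplus>\<^bsub>R\<^esub> g i y) (t i)) {..<n}"
    unfolding E_def
    by (rule M.finsum_cong'[OF refl]) (use x y t gc rhom.h_add[OF g_rhom] in auto)
  also have "\<dots> = E x \<oplus>\<^bsub>M\<^esub> E y"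
    unfolding E_def by (rule lc_add[symmetric]) (use x y t gc in auto)
  finally show "E (x \<oplus>\<^bsub>M\<^esub> y) = E x \<oplus>\<^bsub>M\<^esub> E y" .
next
  fix x r assume x: "x \<in> carrier M" and r: "r \<in> carrier R"
  have "E (smult M r x) = finsum M (\<lambda>i. smult M (g i x \<otimes>\<^bsub>R\<^esub> r) (t i)) {..<n}"
    unfolding E_def
    by (rule M.finsum_cong'[OF refl]) (use x r t gc rhom.h_sm[OF g_rhom] in auto)
  also have "\<dots> = smult M r (E x)"
    unfolding E_def by (rule lc_sm[symmetric]) (use x r t gc in auto)
  finally show "E (smult M r x) = smult M r (E x)" .
qed

sublocale Eh: rhom R M M E by (intro rhomI rm E_hom)

lemma g_E: "i < n \<Longrightarrow> x \<in> carrier M \<Longrightarrow> g i (E x) = g i x"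
proof -
  assume i: "i < n" and x: "x \<in> carrier M"
  interpret gh: rhom R M "RR R" "g i" by (rule g_rhom[OF i])
  have "x \<ominus>\<^bsub>M\<^esub> E x \<in> C" using dec x by (simp add: E_def)
  then have "g i (x \<ominus>\<^bsub>M\<^esub> E x) = \<zero>\<^bsub>R\<^esub>" using gC i by blast
  then have "g i x \<ominus>\<^bsub>RR R\<^esub> g i (E x) = \<zero>\<^bsub>RR R\<^esub>" using gh.h_minus[OF x E_closed[OF x]] by simp
  then have "g i x = g i (E x)"
    by (rule RRm.M.minus_zero_eq'[OF gh.h_closed[OF x] gh.h_closed[OF E_closed[OF x]]])
  then show ?thesis by simp
qed

lemma E_idem: "x \<in> carrier M \<Longrightarrow> E (E x) = E x"
proof -
  assume x: "x \<in> carrier M"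
  have "E (E x) = finsum M (\<lambda>i. smult M (g i x) (t i)) {..<n}"
    unfolding E_def[of "E x"] by (rule M.finsum_cong'[OF refl]) (use t gc g_E x in auto)
  then show ?thesis by (simp add: E_def[of x])
qed

lemma E_C: "c \<in> C \<Longrightarrow> E c = \<zero>\<^bsub>M\<^esub>"
proof -
  assume c: "c \<in> C"
  have "E c = finsum M (\<lambda>i. smult M \<zero>\<^bsub>R\<^esub> (t i)) {..<n}"
    unfolding E_def by (rule M.finsum_cong'[OF refl]) (use c gC t in auto)
  then show ?thesis using lc_zero t by simp
qed

definition "D = E ` carrier M"

lemma D_sub: "submodule R M D" unfolding D_def by (rule Eh.img_sub)

lemma D_carr: "D \<subseteq> carrier M" unfolding D_def using E_closed by auto

lemma D_fix: "d \<in> D \<Longrightarrow> E d = d" unfolding D_def using E_idem by auto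

lemma CD_int: "C \<inter> D = {\<zero>\<^bsub>M\<^esub>}"
proof
  show "C \<inter> D \<subseteq> {\<zero>\<^bsub>M\<^esub>}"
  proof
    fix d assume d: "d \<in> C \<inter> D"
    have "E d = \<zero>\<^bsub>M\<^esub>" using E_C d by blast
    moreover have "E d = d" using D_fix d by blast
    ultimately show "d \<in> {\<zero>\<^bsub>M\<^esub>}" by simp
  qed
  show "{\<zero>\<^bsub>M\<^esub>} \<subseteq> C \<inter> D" using Csub D_sub by (simp add: submodule_def)
qed

lemma CD_sum: "x \<in> carrier M \<Longrightarrow> \<exists>c\<in>C. \<exists>d\<in>D. x = c \<oplus>\<^bsub>M\<^esub> d"
proof -
  assume x: "x \<in> carrier M"
  have "x = (x \<ominus>\<^bsub>M\<^esub> E x) \<oplus>\<^bsub>M\<^esub> E x"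
    using x E_closed[OF x] by (simp add: M.minus_eq M.a_assoc M.l_neg)
  moreover have "x \<ominus>\<^bsub>M\<^esub> E x \<in> C" using dec x by (simp add: E_def)
  moreover have "E x \<in> D" using x by (simp add: D_def)
  ultimately show ?thesis by blast
qed

lemma C_summand: "direct_summand R M C"
  unfolding direct_summand_def using Csub D_sub CD_int CD_sum by blast

lemma proj_C: "\<exists>p. module_hom R M M p \<and> (\<forall>x\<in>carrier M. p x \<in> C) \<and> (\<forall>c\<in>C. p c = c)"
proof (intro exI conjI ballI)
  let ?p = "\<lambda>x. x \<ominus>\<^bsub>M\<^esub> E x"
  show "module_hom R M M ?p"
    unfolding module_hom_def
  proof (intro conjI ballI)
    fix x assume "x \<in> carrier M" then show "?p x \<in> carrier M" using E_closed by simp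
  next
    fix x y assume x: "x \<in> carrier M" and y: "y \<in> carrier M"
    show "?p (x \<oplus>\<^bsub>M\<^esub> y) = ?p x \<oplus>\<^bsub>M\<^esub> ?p y"
      using x y E_closed[OF x] E_closed[OF y] by (simp add: Eh.h_add M.minus_eq M.minus_add M.a_ac)
  next
    fix x r assume x: "x \<in> carrier M" and r: "r \<in> carrier R"
    show "?p (smult M r x) = smult M r (?p x)"
      using x r E_closed[OF x] by (simp add: Eh.h_sm sm_minus_r)
  qed
next
  fix x assume "x \<in> carrier M" then show "x \<ominus>\<^bsub>M\<^esub> E x \<in> C" using dec by (simp add: E_def)
next
  fix c assume c: "c \<in> C"
  then have "c \<in> carrier M" using C_carr by auto
  then show "c \<ominus>\<^bsub>M\<^esub> E c = c" using E_C[OF c] by (simp add: M.minus_eq)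
qed

lemma quot_results: "fin_gen R (quot_mod R M C) \<and> projective R (quot_mod R M C)"
proof -
  interpret Q: rquot R M C by (intro rquotI rm Csub)
  interpret qh: rhom R M Q.Q "\<lambda>x. C +>\<^bsub>M\<^esub> x" by (rule Q.qmap_rhom)
  define fs where "fs i = (\<lambda>A. g i (SOME a. a \<in> A))" for i
  have fsh: "\<forall>i<n. module_hom R Q.Q (RR R) (fs i)"
    unfolding fs_def using Q.induced_hom(1)[OF RR_rm[OF ringR]] g gC by simp
  have fsv: "fs i (C +>\<^bsub>M\<^esub> x) = g i x" if "i < n" "x \<in> carrier M" for i x
    unfolding fs_def using Q.induced_hom(2)[OF RR_rm[OF ringR]] g gC that by simp
  have xs: "\<forall>i<n. C +>\<^bsub>M\<^esub> t i \<in> carrier Q.Q" using t by auto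
  have rep: "\<forall>A\<in>carrier Q.Q. A = finsum Q.Q (\<lambda>i. smult Q.Q (fs i A) (C +>\<^bsub>M\<^esub> t i)) {..<n}"
  proof
    fix A assume "A \<in> carrier Q.Q"
    then obtain x where x: "x \<in> carrier M" "A = C +>\<^bsub>M\<^esub> x" by (auto simp: Q.Q_carrier)
    have "finsum Q.Q (\<lambda>i. smult Q.Q (fs i A) (C +>\<^bsub>M\<^esub> t i)) {..<n}
        = finsum Q.Q (\<lambda>i. C +>\<^bsub>M\<^esub> smult M (g i x) (t i)) {..<n}"
      by (rule Q.Qm.M.finsum_cong'[OF refl]) (use x t gc fsv in \<open>auto simp: Q.Q_sm\<close>)
    also have "\<dots> = C +>\<^bsub>M\<^esub> E x"
      unfolding E_def by (rule qh.h_finsum[symmetric]) (use x t gc in auto)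
    also have "\<dots> = A" using x dec Q.coset_eq[OF x(1) E_closed[OF x(1)]] by (simp add: E_def)
    finally show "A = finsum Q.Q (\<lambda>i. smult Q.Q (fs i A) (C +>\<^bsub>M\<^esub> t i)) {..<n}" ..
  qed
  have "projective R Q.Q" by (rule Q.Qm.dual_basis_projective[OF xs fsh rep])
  moreover have "fin_gen R Q.Q"
  proof (rule Q.Qm.fin_gen_intro[OF xs], intro ballI)
    fix A assume A: "A \<in> carrier Q.Q"
    show "\<exists>c. (\<forall>i<n. c i \<in> carrier R) \<and> A = finsum Q.Q (\<lambda>i. smult Q.Q (c i) (C +>\<^bsub>M\<^esub> t i)) {..<n}"
      by (intro exI[of _ "\<lambda>i. fs i A"] conjI) (use rep fsh A in \<open>auto simp: module_hom_def\<close>)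
  qed
  ultimately show ?thesis by simp
qed

lemma D_results: "fin_gen R (M\<lparr>carrier := D\<rparr>) \<and> projective R (M\<lparr>carrier := D\<rparr>)"
proof -
  interpret N: rmod R "M\<lparr>carrier := D\<rparr>" by (intro rmodI submodule_restrict D_sub)
  have xs: "\<forall>i<n. E (t i) \<in> carrier (M\<lparr>carrier := D\<rparr>)" using t by (simp add: D_def)
  have fsh: "\<forall>i<n. module_hom R (M\<lparr>carrier := D\<rparr>) (RR R) (g i)"
    using g D_carr unfolding module_hom_def by (auto simp: subset_iff)
  have rep: "\<forall>d\<in>carrier (M\<lparr>carrier := D\<rparr>). d = finsum (M\<lparr>carrier := D\<rparr>) (\<lambda>i. smult (M\<lparr>carrier := D\<rparr>) (g i d) (E (t i))) {..<n}"
  proof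
    fix d assume "d \<in> carrier (M\<lparr>carrier := D\<rparr>)"
    then have d: "d \<in> D" "d \<in> carrier M" using D_carr by auto
    have terms: "smult M (g i d) (E (t i)) = E (smult M (g i d) (t i))" if "i < n" for i
      using that t gc d by (simp add: Eh.h_sm)
    have "finsum (M\<lparr>carrier := D\<rparr>) (\<lambda>i. smult (M\<lparr>carrier := D\<rparr>) (g i d) (E (t i))) {..<n}
        = finsum M (\<lambda>i. smult M (g i d) (E (t i))) {..<n}"
      using finsum_restrict[OF D_carr D_sub, of "{..<n}" "\<lambda>i. smult M (g i d) (E (t i))"] terms t gc d
      by (simp add: D_def)
    also have "\<dots> = finsum M (\<lambda>i. E (smult M (g i d) (t i))) {..<n}"
      by (rule M.finsum_cong'[OF refl]) (use terms t gc d in auto)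
    also have "\<dots> = E (E d)"
      unfolding E_def[of d] by (rule Eh.h_finsum[symmetric]) (use t gc d in auto)
    also have "\<dots> = d" using D_fix d E_closed by simp
    finally show "d = finsum (M\<lparr>carrier := D\<rparr>) (\<lambda>i. smult (M\<lparr>carrier := D\<rparr>) (g i d) (E (t i))) {..<n}" ..
  qed
  have "projective R (M\<lparr>carrier := D\<rparr>)" by (rule N.dual_basis_projective[OF xs fsh rep])
  moreover have "fin_gen R (M\<lparr>carrier := D\<rparr>)"
  proof (rule N.fin_gen_intro[OF xs], intro ballI)
    fix A assume A: "A \<in> carrier (M\<lparr>carrier := D\<rparr>)"
    show "\<exists>c. (\<forall>i<n. c i \<in> carrier R) \<and> A = finsum (M\<lparr>carrier := D\<rparr>) (\<lambda>i. smult (M\<lparr>carrier := D\<rparr>) (c i) (E (t i))) {..<n}"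
      by (intro exI[of _ "\<lambda>i. g i A"] conjI) (use rep fsh A in \<open>auto simp: module_hom_def\<close>)
  qed
  ultimately show ?thesis by simp
qed

end

context rmod begin

lemma Hset_rhom: "f \<in> Hset R M K \<Longrightarrow> rhom R M (RR R) f"
  unfolding Hset_def by (intro rhomI rm RR_rm ringR) auto

lemma Cset_sub: "submodule R M (Cset R M K)"
  unfolding submodule_def
proof (intro conjI ballI)
  show "Cset R M K \<subseteq> carrier M" unfolding Cset_def by auto
  show "\<zero>\<^bsub>M\<^esub> \<in> Cset R M K" unfolding Cset_def using rhom.h_zero[OF Hset_rhom] by auto
next
  fix x y assume x: "x \<in> Cset R M K" and y: "y \<in> Cset R M K"
  have "f (x \<oplus>\<^bsub>M\<^esub> y) = \<zero>\<^bsub>R\<^esub>" if f: "f \<in> Hset R M K" for f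
  proof -
    have "f (x \<oplus>\<^bsub>M\<^esub> y) = f x \<oplus>\<^bsub>R\<^esub> f y"
      using rhom.h_add[OF Hset_rhom[OF f]] x y by (simp add: Cset_def)
    moreover have "f x = \<zero>\<^bsub>R\<^esub>" "f y = \<zero>\<^bsub>R\<^esub>" using x y f by (auto simp: Cset_def)
    ultimately show ?thesis by simp
  qed
  then show "x \<oplus>\<^bsub>M\<^esub> y \<in> Cset R M K" using x y unfolding Cset_def by auto
next
  fix x assume x: "x \<in> Cset R M K"
  have "f (\<ominus>\<^bsub>M\<^esub> x) = \<zero>\<^bsub>R\<^esub>" if f: "f \<in> Hset R M K" for f
  proof -
    have fx: "f x = \<zero>\<^bsub>R\<^esub>" "x \<in> carrier M" using x f by (auto simp: Cset_def)
    have "f (\<ominus>\<^bsub>M\<^esub> x) = \<ominus>\<^bsub>RR R\<^esub> f x" using rhom.h_neg[OF Hset_rhom[OF f] fx(2)] .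
    also have "\<dots> = \<ominus>\<^bsub>R\<^esub> \<zero>\<^bsub>R\<^esub>" using RR_a_inv[OF ringR, of "\<zero>\<^bsub>R\<^esub>"] fx by simp
    finally show ?thesis by simp
  qed
  then show "\<ominus>\<^bsub>M\<^esub> x \<in> Cset R M K" using x unfolding Cset_def by auto
next
  fix x r assume x: "x \<in> Cset R M K" and r: "r \<in> carrier R"
  have "f (smult M r x) = \<zero>\<^bsub>R\<^esub>" if f: "f \<in> Hset R M K" for f
  proof -
    have fx: "f x = \<zero>\<^bsub>R\<^esub>" "x \<in> carrier M" using x f by (auto simp: Cset_def)
    have "f (smult M r x) = f x \<otimes>\<^bsub>R\<^esub> r" using rhom.h_sm[OF Hset_rhom[OF f] fx(2) r] by simp
    then show ?thesis using fx r by simp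
  qed
  then show "smult M r x \<in> Cset R M K" using x r unfolding Cset_def by auto
qed

lemma zero_sub: "submodule R M {\<zero>\<^bsub>M\<^esub>}"
  unfolding submodule_def by auto

lemma split_exists:
  assumes fg: "fin_gen R M" and sub: "submodule R M K" and baer: "\<forall>n\<ge>1. baer_ring (matring R n)"
  shows "\<exists>n t g. splitloc R M (Cset R M K) n t g"
proof -
  obtain n t g where t: "\<forall>i<(n::nat). t i \<in> carrier M" and g: "\<forall>i<n. g i \<in> Hset R M K"
    and dec: "\<forall>x\<in>carrier M. x \<ominus>\<^bsub>M\<^esub> finsum M (\<lambda>i. smult M (g i x) (t i)) {..<n} \<in> Cset R M K"
    using core_final[OF fg sub baer] by blast
  have "splitloc R M (Cset R M K) n t g"
    unfolding splitloc_def splitloc_axioms_def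
    using rmod_axioms Cset_sub t g dec by (auto simp: Hset_def Cset_def)
  then show ?thesis by blast
qed

lemma torsB_char:
  assumes Csub: "submodule R M C"
    and Cdef: "C = {x\<in>carrier M. \<forall>f. module_hom R M (RR R) f \<longrightarrow> f x = \<zero>\<^bsub>R\<^esub>}"
    and p: "module_hom R M M p" "\<forall>x\<in>carrier M. p x \<in> C" "\<forall>c\<in>C. p c = c"
  shows "torsB R M = C"
proof
  show "torsB R M \<subseteq> C"
  proof
    fix x assume "x \<in> torsB R M"
    then obtain Q where Q: "submodule R M Q" "bounded R (M\<lparr>carrier := Q\<rparr>)" "x \<in> Q"
      unfolding torsB_def by blast
    have xc: "x \<in> carrier M" using Q by (auto simp: submodule_def)
    have "f x = \<zero>\<^bsub>R\<^esub>" if f: "module_hom R M (RR R) f" for f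
    proof -
      have "module_hom R (M\<lparr>carrier := Q\<rparr>) (RR R) f"
      proof -
        have QM: "Q \<subseteq> carrier M" using Q(1) by (simp add: submodule_def)
        show ?thesis using f QM unfolding module_hom_def by (simp add: subset_iff)
      qed
      then show ?thesis using Q(2,3) unfolding bounded_def by auto
    qed
    then show "x \<in> C" using xc Cdef by blast
  qed
  show "C \<subseteq> torsB R M"
  proof -
    have "bounded R (M\<lparr>carrier := C\<rparr>)"
      unfolding bounded_def
    proof (intro allI impI ballI)
      fix f c assume f: "module_hom R (M\<lparr>carrier := C\<rparr>) (RR R) f" and c: "c \<in> carrier (M\<lparr>carrier := C\<rparr>)"
      have "module_hom R M (RR R) (f \<circ> p)"
        using f p unfolding module_hom_def by auto
      then have "(f \<circ> p) c = \<zero>\<^bsub>R\<^esub>" using c Cdef by auto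
      then show "f c = \<zero>\<^bsub>R\<^esub>" using c p(3) by simp
    qed
    then show ?thesis unfolding torsB_def using Csub by blast
  qed
qed

lemma Cset_zero: "Cset R M {\<zero>\<^bsub>M\<^esub>} = {x\<in>carrier M. \<forall>f. module_hom R M (RR R) f \<longrightarrow> f x = \<zero>\<^bsub>R\<^esub>}"
proof -
  have z: "f \<zero>\<^bsub>M\<^esub> = \<zero>\<^bsub>R\<^esub>" if "module_hom R M (RR R) f" for f
    using rhom.h_zero[OF rhomI[OF rm RR_rm[OF ringR] that]] by simp
  have "Hset R M {\<zero>\<^bsub>M\<^esub>} = {f. module_hom R M (RR R) f}"
    unfolding Hset_def using z by auto
  then show ?thesis unfolding Cset_def by auto
qed

lemma torsB_fg:
  assumes fg: "fin_gen R M" and baer: "\<forall>n\<ge>1. baer_ring (matring R n)"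
  shows "torsB R M = Cset R M {\<zero>\<^bsub>M\<^esub>}"
proof -
  obtain n t g where sp: "splitloc R M (Cset R M {\<zero>\<^bsub>M\<^esub>}) n t g"
    using split_exists[OF fg zero_sub baer] by blast
  obtain p where p: "module_hom R M M p" "\<forall>x\<in>carrier M. p x \<in> Cset R M {\<zero>\<^bsub>M\<^esub>}"
      "\<forall>c\<in>Cset R M {\<zero>\<^bsub>M\<^esub>}. p c = c"
    using splitloc.proj_C[OF sp] by blast
  show ?thesis by (rule torsB_char[OF Cset_sub Cset_zero p])
qed

end

context rquot begin

lemma clB_eq:
  assumes fg: "fin_gen R M" and baer: "\<forall>n\<ge>1. baer_ring (matring R n)"
  shows "clB R M K = Cset R M K"
proof -
  have tq: "torsB R Q = Cset R Q {\<zero>\<^bsub>Q\<^esub>}" by (rule Qm.torsB_fg[OF Q_fin_gen[OF fg] baer])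
  interpret qh: rhom R M Q "\<lambda>x. K +>\<^bsub>M\<^esub> x" by (rule qmap_rhom)
  have "x \<in> clB R M K \<longleftrightarrow> x \<in> Cset R M K" for x
  proof (cases "x \<in> carrier M")
    case False then show ?thesis by (simp add: clB_def Cset_def)
  next
    case x: True
    have "K +>\<^bsub>M\<^esub> x \<in> Cset R Q {\<zero>\<^bsub>Q\<^esub>} \<longleftrightarrow> (\<forall>f\<in>Hset R M K. f x = \<zero>\<^bsub>R\<^esub>)"
    proof
      assume h: "K +>\<^bsub>M\<^esub> x \<in> Cset R Q {\<zero>\<^bsub>Q\<^esub>}"
      show "\<forall>f\<in>Hset R M K. f x = \<zero>\<^bsub>R\<^esub>"
      proof
        fix f assume f: "f \<in> Hset R M K"
        have fh: "module_hom R M (RR R) f" "\<forall>k\<in>K. f k = \<zero>\<^bsub>RR R\<^esub>" using f by (auto simp: Hset_def)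
        note F = induced_hom[OF RR_rm[OF ringR] fh]
        have "(\<lambda>A. f (SOME a. a \<in> A)) \<in> Hset R Q {\<zero>\<^bsub>Q\<^esub>}"
          unfolding Hset_def using F(1) rhom.h_zero[OF rhomI[OF Q_rm RR_rm[OF ringR] F(1)]] by auto
        then have "f (SOME a. a \<in> K +>\<^bsub>M\<^esub> x) = \<zero>\<^bsub>R\<^esub>" using h by (auto simp: Cset_def)
        then show "f x = \<zero>\<^bsub>R\<^esub>" using F(2)[OF x] by simp
      qed
    next
      assume h: "\<forall>f\<in>Hset R M K. f x = \<zero>\<^bsub>R\<^esub>"
      have "F (K +>\<^bsub>M\<^esub> x) = \<zero>\<^bsub>R\<^esub>" if F: "F \<in> Hset R Q {\<zero>\<^bsub>Q\<^esub>}" for F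
      proof -
        have Fh: "module_hom R Q (RR R) F" "F \<zero>\<^bsub>Q\<^esub> = \<zero>\<^bsub>R\<^esub>" using F by (auto simp: Hset_def)
        have "module_hom R M (RR R) (F \<circ> (\<lambda>x. K +>\<^bsub>M\<^esub> x))" by (rule module_hom_comp[OF qmap_hom Fh(1)])
        moreover have "(F \<circ> (\<lambda>x. K +>\<^bsub>M\<^esub> x)) k = \<zero>\<^bsub>R\<^esub>" if k: "k \<in> K" for k
        proof -
          have "k \<in> carrier M" using k K_sub by auto
          then have "K +>\<^bsub>M\<^esub> k = K" using coset_zero_iff k by blast
          then have "K +>\<^bsub>M\<^esub> k = \<zero>\<^bsub>Q\<^esub>" unfolding Q_zero K_coset .
          then show ?thesis using Fh(2) by simp
        qed
        ultimately have "F \<circ> (\<lambda>x. K +>\<^bsub>M\<^esub> x) \<in> Hset R M K" unfolding Hset_def by auto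
        then show ?thesis using h by auto
      qed
      then show "K +>\<^bsub>M\<^esub> x \<in> Cset R Q {\<zero>\<^bsub>Q\<^esub>}" using x unfolding Cset_def by auto
    qed
    then show ?thesis using x tq by (simp add: clB_def Cset_def)
  qed
  then show ?thesis by blast
qed

end

locale rring = fixes R :: "'a ring" assumes rr: "ring R"
begin
sublocale R: ring R by (rule rr)

lemma ri_iff: "right_ideal R I \<longleftrightarrow> I \<subseteq> carrier R \<and> \<zero>\<^bsub>R\<^esub> \<in> I \<and> (\<forall>x\<in>I. \<forall>y\<in>I. x \<oplus>\<^bsub>R\<^esub> y \<in> I)
   \<and> (\<forall>x\<in>I. \<ominus>\<^bsub>R\<^esub> x \<in> I) \<and> (\<forall>x\<in>I. \<forall>r\<in>carrier R. x \<otimes>\<^bsub>R\<^esub> r \<in> I)"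
proof -
  have "(\<forall>x\<in>I. \<ominus>\<^bsub>RR R\<^esub> x \<in> I) \<longleftrightarrow> (\<forall>x\<in>I. \<ominus>\<^bsub>R\<^esub> x \<in> I)" if "I \<subseteq> carrier R"
  proof -
    have "\<forall>x\<in>I. \<ominus>\<^bsub>RR R\<^esub> x = \<ominus>\<^bsub>R\<^esub> x" using RR_a_inv[OF rr] that by blast
    then show ?thesis by simp
  qed
  then show ?thesis unfolding right_ideal_def submodule_def by auto
qed

lemma ess_ri: "essential_right_ideal R I \<Longrightarrow> right_ideal R I"
  unfolding essential_right_ideal_def by simp

lemma ri_nonzero: "right_ideal R J \<Longrightarrow> J \<noteq> {\<zero>\<^bsub>R\<^esub>} \<Longrightarrow> \<exists>j\<in>J. j \<noteq> \<zero>\<^bsub>R\<^esub>"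
  using ri_iff by blast

lemma ess_super: "essential_right_ideal R I \<Longrightarrow> right_ideal R J \<Longrightarrow> I \<subseteq> J \<Longrightarrow> essential_right_ideal R J"
  unfolding essential_right_ideal_def
proof (intro conjI allI impI)
  fix L assume h: "right_ideal R I \<and> (\<forall>J. right_ideal R J \<and> J \<noteq> {\<zero>\<^bsub>R\<^esub>} \<longrightarrow> I \<inter> J \<noteq> {\<zero>\<^bsub>R\<^esub>})"
    "right_ideal R J" "I \<subseteq> J" and L: "right_ideal R L \<and> L \<noteq> {\<zero>\<^bsub>R\<^esub>}"
  have "I \<inter> L \<noteq> {\<zero>\<^bsub>R\<^esub>}" using h(1) L by blast
  moreover have "\<zero>\<^bsub>R\<^esub> \<in> I" "\<zero>\<^bsub>R\<^esub> \<in> L" using h(1) L unfolding ri_iff by auto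
  ultimately obtain x where x: "x \<in> I \<inter> L" "x \<noteq> \<zero>\<^bsub>R\<^esub>" by blast
  then show "J \<inter> L \<noteq> {\<zero>\<^bsub>R\<^esub>}" using h(3) by blast
qed simp

lemma ri_int: "right_ideal R I \<Longrightarrow> right_ideal R J \<Longrightarrow> right_ideal R (I \<inter> J)"
  unfolding ri_iff by blast

lemma ri_carrier: "right_ideal R (carrier R)"
  unfolding ri_iff by auto

lemma ess_full: "essential_right_ideal R (carrier R)"
  unfolding essential_right_ideal_def
proof (intro conjI allI impI)
  show "right_ideal R (carrier R)" by (rule ri_carrier)
  fix J assume J: "right_ideal R J \<and> J \<noteq> {\<zero>\<^bsub>R\<^esub>}"
  then have "J \<subseteq> carrier R" unfolding ri_iff by blast
  then show "carrier R \<inter> J \<noteq> {\<zero>\<^bsub>R\<^esub>}" using J by (simp add: Int_absorb1)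
qed

lemma ess_int: "essential_right_ideal R I \<Longrightarrow> essential_right_ideal R J \<Longrightarrow> essential_right_ideal R (I \<inter> J)"
  unfolding essential_right_ideal_def
proof (intro conjI allI impI)
  assume I: "right_ideal R I \<and> (\<forall>J. right_ideal R J \<and> J \<noteq> {\<zero>\<^bsub>R\<^esub>} \<longrightarrow> I \<inter> J \<noteq> {\<zero>\<^bsub>R\<^esub>})"
    and J: "right_ideal R J \<and> (\<forall>L. right_ideal R L \<and> L \<noteq> {\<zero>\<^bsub>R\<^esub>} \<longrightarrow> J \<inter> L \<noteq> {\<zero>\<^bsub>R\<^esub>})"
  show "right_ideal R (I \<inter> J)" using I J ri_int by blast
  fix L assume L: "right_ideal R L \<and> L \<noteq> {\<zero>\<^bsub>R\<^esub>}"
  have "right_ideal R (I \<inter> L)" using I L ri_int by blast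
  moreover have "I \<inter> L \<noteq> {\<zero>\<^bsub>R\<^esub>}" using I L by blast
  ultimately have "J \<inter> (I \<inter> L) \<noteq> {\<zero>\<^bsub>R\<^esub>}" using J by blast
  then show "I \<inter> J \<inter> L \<noteq> {\<zero>\<^bsub>R\<^esub>}" by (simp add: Int_ac)
qed

lemma ri_facts:
  assumes "right_ideal R L"
  shows "L \<subseteq> carrier R" "\<zero>\<^bsub>R\<^esub> \<in> L" "\<And>x y. x \<in> L \<Longrightarrow> y \<in> L \<Longrightarrow> x \<oplus>\<^bsub>R\<^esub> y \<in> L"
    "\<And>x. x \<in> L \<Longrightarrow> \<ominus>\<^bsub>R\<^esub> x \<in> L" "\<And>x r. x \<in> L \<Longrightarrow> r \<in> carrier R \<Longrightarrow> x \<otimes>\<^bsub>R\<^esub> r \<in> L"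
  using assms unfolding ri_iff by blast+

lemma ess_pre:
  assumes I: "essential_right_ideal R I" and r: "r \<in> carrier R"
  shows "essential_right_ideal R {s \<in> carrier R. r \<otimes>\<^bsub>R\<^esub> s \<in> I}"
proof -
  have Ir: "right_ideal R I" using I by (rule ess_ri)
  note If = ri_facts[OF Ir]
  have ri: "right_ideal R {s \<in> carrier R. r \<otimes>\<^bsub>R\<^esub> s \<in> I}"
    unfolding ri_iff
  proof (intro conjI ballI)
    show "{s \<in> carrier R. r \<otimes>\<^bsub>R\<^esub> s \<in> I} \<subseteq> carrier R" by auto
    show "\<zero>\<^bsub>R\<^esub> \<in> {s \<in> carrier R. r \<otimes>\<^bsub>R\<^esub> s \<in> I}" using r If(2) by simp
  next
    fix x y assume "x \<in> {s \<in> carrier R. r \<otimes>\<^bsub>R\<^esub> s \<in> I}" "y \<in> {s \<in> carrier R. r \<otimes>\<^bsub>R\<^esub> s \<in> I}"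
    then show "x \<oplus>\<^bsub>R\<^esub> y \<in> {s \<in> carrier R. r \<otimes>\<^bsub>R\<^esub> s \<in> I}" using r If(3) by (simp add: R.r_distr)
  next
    fix x assume "x \<in> {s \<in> carrier R. r \<otimes>\<^bsub>R\<^esub> s \<in> I}"
    then show "\<ominus>\<^bsub>R\<^esub> x \<in> {s \<in> carrier R. r \<otimes>\<^bsub>R\<^esub> s \<in> I}" using r If(4) by (simp add: R.r_minus)
  next
    fix x t assume "x \<in> {s \<in> carrier R. r \<otimes>\<^bsub>R\<^esub> s \<in> I}" "t \<in> carrier R"
    then show "x \<otimes>\<^bsub>R\<^esub> t \<in> {s \<in> carrier R. r \<otimes>\<^bsub>R\<^esub> s \<in> I}" using r If(5) by (simp add: R.m_assoc[symmetric])
  qed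
  show ?thesis unfolding essential_right_ideal_def
  proof (intro conjI allI impI)
    show "right_ideal R {s \<in> carrier R. r \<otimes>\<^bsub>R\<^esub> s \<in> I}" by (rule ri)
    fix L assume L: "right_ideal R L \<and> L \<noteq> {\<zero>\<^bsub>R\<^esub>}"
    note Lf = ri_facts[OF conjunct1[OF L]]
    show "{s \<in> carrier R. r \<otimes>\<^bsub>R\<^esub> s \<in> I} \<inter> L \<noteq> {\<zero>\<^bsub>R\<^esub>}"
    proof (cases "\<forall>j\<in>L. r \<otimes>\<^bsub>R\<^esub> j = \<zero>\<^bsub>R\<^esub>")
      case True
      then have "L \<subseteq> {s \<in> carrier R. r \<otimes>\<^bsub>R\<^esub> s \<in> I}" using Lf(1) If(2) by auto
      then show ?thesis using L by blast
    next
      case False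
      define rL where "rL = (\<lambda>j. r \<otimes>\<^bsub>R\<^esub> j) ` L"
      have rLi: "right_ideal R rL"
        unfolding ri_iff rL_def
      proof (intro conjI ballI)
        show "(\<lambda>j. r \<otimes>\<^bsub>R\<^esub> j) ` L \<subseteq> carrier R" using Lf(1) r by auto
        show "\<zero>\<^bsub>R\<^esub> \<in> (\<lambda>j. r \<otimes>\<^bsub>R\<^esub> j) ` L" using Lf(2) r by (intro image_eqI[of _ _ "\<zero>\<^bsub>R\<^esub>"]) auto
      next
        fix x y assume "x \<in> (\<lambda>j. r \<otimes>\<^bsub>R\<^esub> j) ` L" "y \<in> (\<lambda>j. r \<otimes>\<^bsub>R\<^esub> j) ` L"
        then obtain a b where ab: "a \<in> L" "b \<in> L" "x = r \<otimes>\<^bsub>R\<^esub> a" "y = r \<otimes>\<^bsub>R\<^esub> b" by auto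
        then have "x \<oplus>\<^bsub>R\<^esub> y = r \<otimes>\<^bsub>R\<^esub> (a \<oplus>\<^bsub>R\<^esub> b)" using Lf(1) r by (simp add: R.r_distr subset_iff)
        then show "x \<oplus>\<^bsub>R\<^esub> y \<in> (\<lambda>j. r \<otimes>\<^bsub>R\<^esub> j) ` L" using Lf(3)[OF ab(1,2)] by blast
      next
        fix x assume "x \<in> (\<lambda>j. r \<otimes>\<^bsub>R\<^esub> j) ` L"
        then obtain a where a: "a \<in> L" "x = r \<otimes>\<^bsub>R\<^esub> a" by auto
        then have "\<ominus>\<^bsub>R\<^esub> x = r \<otimes>\<^bsub>R\<^esub> (\<ominus>\<^bsub>R\<^esub> a)" using Lf(1) r by (simp add: R.r_minus subset_iff)
        then show "\<ominus>\<^bsub>R\<^esub> x \<in> (\<lambda>j. r \<otimes>\<^bsub>R\<^esub> j) ` L" using Lf(4)[OF a(1)] by blast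
      next
        fix x t assume "x \<in> (\<lambda>j. r \<otimes>\<^bsub>R\<^esub> j) ` L" and t: "t \<in> carrier R"
        then obtain a where a: "a \<in> L" "x = r \<otimes>\<^bsub>R\<^esub> a" by auto
        then have "x \<otimes>\<^bsub>R\<^esub> t = r \<otimes>\<^bsub>R\<^esub> (a \<otimes>\<^bsub>R\<^esub> t)" using Lf(1) r t by (simp add: R.m_assoc subset_iff)
        then show "x \<otimes>\<^bsub>R\<^esub> t \<in> (\<lambda>j. r \<otimes>\<^bsub>R\<^esub> j) ` L" using Lf(5)[OF a(1) t] by blast
      qed
      have "rL \<noteq> {\<zero>\<^bsub>R\<^esub>}" using False unfolding rL_def by auto
      then have "I \<inter> rL \<noteq> {\<zero>\<^bsub>R\<^esub>}" using I rLi unfolding essential_right_ideal_def by blast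
      moreover have "\<zero>\<^bsub>R\<^esub> \<in> I \<inter> rL" using If(2) ri_facts(2)[OF rLi] by simp
      ultimately obtain y where y: "y \<in> I \<inter> rL" "y \<noteq> \<zero>\<^bsub>R\<^esub>" by blast
      then obtain j where j: "j \<in> L" "y = r \<otimes>\<^bsub>R\<^esub> j" unfolding rL_def by auto
      have "j \<noteq> \<zero>\<^bsub>R\<^esub>" using y j r by auto
      moreover have "j \<in> {s \<in> carrier R. r \<otimes>\<^bsub>R\<^esub> s \<in> I}" using j y Lf(1) by auto
      ultimately show ?thesis using j by blast
    qed
  qed
qed

end

sublocale rmod \<subseteq> RG: rring R by (rule rring.intro, rule ringR)

context rmod begin

definition "ann x = {r \<in> carrier R. smult M r x = \<zero>\<^bsub>M\<^esub>}"

lemma ann_ri: "x \<in> carrier M \<Longrightarrow> right_ideal R (ann x)"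
  unfolding RG.ri_iff ann_def
  by (auto simp: sm_add_l sm_neg_l sm_mult)

lemma Z_def': "singular_sub R M = {x \<in> carrier M. essential_right_ideal R (ann x)}"
  by (simp add: singular_sub_def ann_def)

lemma Z_sub: "submodule R M (singular_sub R M)"
  unfolding submodule_def Z_def'
proof (intro conjI ballI)
  show "{x \<in> carrier M. essential_right_ideal R (ann x)} \<subseteq> carrier M" by auto
  have "ann \<zero>\<^bsub>M\<^esub> = carrier R" by (auto simp: ann_def)
  then show "\<zero>\<^bsub>M\<^esub> \<in> {x \<in> carrier M. essential_right_ideal R (ann x)}" using RG.ess_full by simp
next
  fix x y assume x: "x \<in> {x \<in> carrier M. essential_right_ideal R (ann x)}"
    and y: "y \<in> {x \<in> carrier M. essential_right_ideal R (ann x)}"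
  have xc: "x \<in> carrier M" "essential_right_ideal R (ann x)" using x by auto
  have yc: "y \<in> carrier M" "essential_right_ideal R (ann y)" using y by auto
  have sub: "ann x \<inter> ann y \<subseteq> ann (x \<oplus>\<^bsub>M\<^esub> y)" using xc yc by (auto simp: ann_def sm_add_r)
  have "essential_right_ideal R (ann (x \<oplus>\<^bsub>M\<^esub> y))"
    by (rule RG.ess_super[OF RG.ess_int[OF xc(2) yc(2)] ann_ri sub]) (use xc yc in simp)
  then show "x \<oplus>\<^bsub>M\<^esub> y \<in> {x \<in> carrier M. essential_right_ideal R (ann x)}" using xc yc by simp
next
  fix x assume x: "x \<in> {x \<in> carrier M. essential_right_ideal R (ann x)}"
  have xc: "x \<in> carrier M" "essential_right_ideal R (ann x)" using x by auto
  have sub: "ann x \<subseteq> ann (\<ominus>\<^bsub>M\<^esub> x)" using xc by (auto simp: ann_def sm_neg_r)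
  have "essential_right_ideal R (ann (\<ominus>\<^bsub>M\<^esub> x))"
    by (rule RG.ess_super[OF xc(2) ann_ri sub]) (use xc in simp)
  then show "\<ominus>\<^bsub>M\<^esub> x \<in> {x \<in> carrier M. essential_right_ideal R (ann x)}" using xc by simp
next
  fix x r assume x: "x \<in> {x \<in> carrier M. essential_right_ideal R (ann x)}" and r: "r \<in> carrier R"
  have xc: "x \<in> carrier M" "essential_right_ideal R (ann x)" using x by auto
  have sub: "{s \<in> carrier R. r \<otimes>\<^bsub>R\<^esub> s \<in> ann x} \<subseteq> ann (smult M r x)"
    using xc r by (auto simp: ann_def sm_mult[symmetric])
  have "essential_right_ideal R (ann (smult M r x))"
    by (rule RG.ess_super[OF RG.ess_pre[OF xc(2) r] ann_ri sub]) (use xc r in simp)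
  then show "smult M r x \<in> {x \<in> carrier M. essential_right_ideal R (ann x)}" using xc r by simp
qed

end

context rmod begin

interpretation RRm: rmod R "RR R" by (intro rmodI RR_rm ringR)

lemma RRann: "RRm.ann a = {r \<in> carrier R. a \<otimes>\<^bsub>R\<^esub> r = \<zero>\<^bsub>R\<^esub>}"
  by (simp add: RRm.ann_def)

lemma RR_Z:
  assumes ns: "right_nonsingular R" and a: "a \<in> carrier R" "a \<noteq> \<zero>\<^bsub>R\<^esub>"
  shows "\<not> essential_right_ideal R (RRm.ann a)"
proof
  assume "essential_right_ideal R (RRm.ann a)"
  then have "a \<in> singular_sub R (RR R)" using a RRm.Z_def' by simp
  then show False using ns a unfolding right_nonsingular_def nonsingular_def by simp
qed

lemma Z_hom_zero:
  assumes ns: "right_nonsingular R" and f: "module_hom R M (RR R) f" and x: "x \<in> singular_sub R M"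
  shows "f x = \<zero>\<^bsub>R\<^esub>"
proof (rule ccontr)
  assume nz: "f x \<noteq> \<zero>\<^bsub>R\<^esub>"
  interpret fh: rhom R M "RR R" f by (intro rhomI rm RR_rm ringR f)
  have xc: "x \<in> carrier M" "essential_right_ideal R (ann x)" using x Z_def' by auto
  have fxc: "f x \<in> carrier R" using fh.h_closed[OF xc(1)] by simp
  have sub: "ann x \<subseteq> RRm.ann (f x)"
  proof
    fix r assume r: "r \<in> ann x"
    have r': "r \<in> carrier R" "smult M r x = \<zero>\<^bsub>M\<^esub>" using r by (auto simp: ann_def)
    have "f x \<otimes>\<^bsub>R\<^esub> r = f (smult M r x)" using fh.h_sm[OF xc(1) r'(1)] by simp
    also have "\<dots> = f \<zero>\<^bsub>M\<^esub>" using r'(2) by simp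
    also have "\<dots> = \<zero>\<^bsub>R\<^esub>" using fh.h_zero by simp
    finally have "f x \<otimes>\<^bsub>R\<^esub> r = \<zero>\<^bsub>R\<^esub>" .
    then show "r \<in> RRm.ann (f x)" using r by (simp add: RRann ann_def)
  qed
  have "essential_right_ideal R (RRm.ann (f x))"
    by (rule RG.ess_super[OF xc(2) RRm.ann_ri sub]) (simp add: fxc)
  then show False using RR_Z[OF ns fxc nz] by simp
qed

lemma Z2:
  assumes ns: "right_nonsingular R" and y: "y \<in> carrier M" and I: "essential_right_ideal R I"
    and h: "\<forall>r\<in>I. smult M r y \<in> singular_sub R M"
  shows "y \<in> singular_sub R M"
proof -
  have "essential_right_ideal R (ann y)"
    unfolding essential_right_ideal_def
  proof (intro conjI allI impI)
    show "right_ideal R (ann y)" by (rule ann_ri[OF y])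
    fix L assume L: "right_ideal R L \<and> L \<noteq> {\<zero>\<^bsub>R\<^esub>}"
    note Lf = RG.ri_facts[OF conjunct1[OF L]]
    note If = RG.ri_facts[OF RG.ess_ri[OF I]]
    have "I \<inter> L \<noteq> {\<zero>\<^bsub>R\<^esub>}" using I L unfolding essential_right_ideal_def by blast
    moreover have "\<zero>\<^bsub>R\<^esub> \<in> I \<inter> L" using Lf(2) If(2) by simp
    ultimately obtain a where a: "a \<in> I" "a \<in> L" "a \<noteq> \<zero>\<^bsub>R\<^esub>" by blast
    have ac: "a \<in> carrier R" using a If(1) by auto
    have ay: "smult M a y \<in> singular_sub R M" using h a by simp
    then have ess: "essential_right_ideal R (ann (smult M a y))" using Z_def' by simp
    have "\<not> essential_right_ideal R (RRm.ann a)" by (rule RR_Z[OF ns ac a(3)])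
    moreover have ri: "right_ideal R (RRm.ann a)" by (rule RRm.ann_ri) (simp add: ac)
    ultimately obtain J where J: "right_ideal R J" "J \<noteq> {\<zero>\<^bsub>R\<^esub>}" "RRm.ann a \<inter> J = {\<zero>\<^bsub>R\<^esub>}"
      unfolding essential_right_ideal_def by blast
    note Jf = RG.ri_facts[OF J(1)]
    have "ann (smult M a y) \<inter> J \<noteq> {\<zero>\<^bsub>R\<^esub>}" using ess J unfolding essential_right_ideal_def by blast
    moreover have "\<zero>\<^bsub>R\<^esub> \<in> ann (smult M a y) \<inter> J" using Jf(2) ay Z_def' by (auto simp: ann_def)
    ultimately obtain t where t: "t \<in> ann (smult M a y)" "t \<in> J" "t \<noteq> \<zero>\<^bsub>R\<^esub>" by blast
    have tc: "t \<in> carrier R" using t(2) Jf(1) by auto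
    have "a \<otimes>\<^bsub>R\<^esub> t \<noteq> \<zero>\<^bsub>R\<^esub>"
    proof
      assume "a \<otimes>\<^bsub>R\<^esub> t = \<zero>\<^bsub>R\<^esub>"
      then have "t \<in> RRm.ann a \<inter> J" using t tc by (simp add: RRann)
      then show False using J(3) t(3) by auto
    qed
    moreover have "a \<otimes>\<^bsub>R\<^esub> t \<in> ann y"
      using t(1) tc ac y by (simp add: ann_def sm_mult)
    moreover have "a \<otimes>\<^bsub>R\<^esub> t \<in> L" using Lf(5)[OF a(2) tc] .
    ultimately show "ann y \<inter> L \<noteq> {\<zero>\<^bsub>R\<^esub>}" by blast
  qed
  then show ?thesis using y Z_def' by simp
qed

lemma torsT_eq:
  assumes ns: "right_nonsingular R"
  shows "torsT R M = singular_sub R M"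
proof -
  let ?Z = "singular_sub R M"
  interpret Q: rquot R M ?Z by (intro rquotI rm Z_sub)
  have annQ: "Q.Qm.ann (?Z +>\<^bsub>M\<^esub> x) = {r \<in> carrier R. smult M r x \<in> ?Z}" if x: "x \<in> carrier M" for x
  proof -
    have "smult Q.Q r (?Z +>\<^bsub>M\<^esub> x) = \<zero>\<^bsub>Q.Q\<^esub> \<longleftrightarrow> smult M r x \<in> ?Z" if r: "r \<in> carrier R" for r
    proof -
      have "smult Q.Q r (?Z +>\<^bsub>M\<^esub> x) = ?Z +>\<^bsub>M\<^esub> smult M r x" by (rule Q.Q_sm[OF x r])
      moreover have "\<zero>\<^bsub>Q.Q\<^esub> = ?Z" by (simp add: Q.Q_zero Q.K_coset)
      ultimately show ?thesis using Q.coset_zero_iff[OF sm_closed[OF r x]] by simp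
    qed
    then show ?thesis by (auto simp: Q.Qm.ann_def)
  qed
  have "x \<in> torsT R M \<longleftrightarrow> x \<in> ?Z" for x
  proof (cases "x \<in> carrier M")
    case False then show ?thesis using Z_sub by (auto simp: torsT_def submodule_def)
  next
    case x: True
    have "x \<in> torsT R M \<longleftrightarrow> essential_right_ideal R {r \<in> carrier R. smult M r x \<in> ?Z}"
      using x annQ[OF x] by (simp add: torsT_def Q.Qm.Z_def')
    also have "\<dots> \<longleftrightarrow> x \<in> ?Z"
    proof
      assume "essential_right_ideal R {r \<in> carrier R. smult M r x \<in> ?Z}"
      then show "x \<in> ?Z" by (rule Z2[OF ns x]) auto
    next
      assume xz: "x \<in> ?Z"
      have "{r \<in> carrier R. smult M r x \<in> ?Z} = carrier R"
        using xz Z_sub by (auto simp: submodule_def)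
      then show "essential_right_ideal R {r \<in> carrier R. smult M r x \<in> ?Z}" using RG.ess_full by simp
    qed
    finally show ?thesis .
  qed
  then show ?thesis by blast
qed

lemma Z_torsB:
  assumes ns: "right_nonsingular R" and fg: "fin_gen R M" and baer: "\<forall>n\<ge>1. baer_ring (matring R n)"
  shows "singular_sub R M \<subseteq> torsB R M"
proof
  fix x assume x: "x \<in> singular_sub R M"
  have "x \<in> carrier M" using x Z_def' by auto
  then show "x \<in> torsB R M" unfolding torsB_fg[OF fg baer] Cset_zero
    using Z_hom_zero[OF ns _ x] by auto
qed

end

lemma (in rhom) preimage_sub:
  assumes S: "submodule R N S"
  shows "submodule R M {x \<in> carrier M. h x \<in> S}"
  unfolding submodule_def
proof (intro conjI ballI)
  show "{x \<in> carrier M. h x \<in> S} \<subseteq> carrier M" by auto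
  show "\<zero>\<^bsub>M\<^esub> \<in> {x \<in> carrier M. h x \<in> S}" using S by (simp add: submodule_def)
next
  fix x y assume "x \<in> {x \<in> carrier M. h x \<in> S}" "y \<in> {x \<in> carrier M. h x \<in> S}"
  then show "x \<oplus>\<^bsub>M\<^esub> y \<in> {x \<in> carrier M. h x \<in> S}" using S by (simp add: submodule_def h_add)
next
  fix x assume "x \<in> {x \<in> carrier M. h x \<in> S}"
  then show "\<ominus>\<^bsub>M\<^esub> x \<in> {x \<in> carrier M. h x \<in> S}" using S by (simp add: submodule_def h_neg)
next
  fix x r assume "x \<in> {x \<in> carrier M. h x \<in> S}" "r \<in> carrier R"
  then show "smult M r x \<in> {x \<in> carrier M. h x \<in> S}" using S by (simp add: submodule_def h_sm)
qed

lemma fm_finsum_apply: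
  assumes r: "ring R" and fin: "finite A" and f: "f \<in> A \<rightarrow> carrier (free_mod R I)"
  shows "finsum (free_mod R I) f A j = finsum R (\<lambda>i. f i j) A"
  using fin f
proof (induct A rule: finite_induct)
  case empty
  interpret F: rmod R "free_mod R I" by (intro rmodI free_mod_rm r)
  show ?case by simp
next
  case (insert x F)
  interpret V: rmod R "free_mod R I" by (intro rmodI free_mod_rm r)
  have fc: "f x j \<in> carrier R" "\<forall>i\<in>F. f i j \<in> carrier R"
    using insert(4) by (auto simp: free_mod_carrier Pi_def) (metis V.R.zero_closed)+
  have "finsum (free_mod R I) f (insert x F) = f x \<oplus>\<^bsub>free_mod R I\<^esub> finsum (free_mod R I) f F"
    using insert by (intro V.M.finsum_insert) auto
  then have "finsum (free_mod R I) f (insert x F) j = f x j \<oplus>\<^bsub>R\<^esub> finsum R (\<lambda>i. f i j) F"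
    using insert by simp
  also have "\<dots> = finsum R (\<lambda>i. f i j) (insert x F)"
    using insert fc by (subst V.R.finsum_insert) auto
  finally show ?case .
qed

context rmod begin

lemma torsB_Z:
  assumes ss: "right_strongly_semihereditary R" and fg: "fin_gen R M"
    and baer: "\<forall>n\<ge>1. baer_ring (matring R n)"
  shows "torsB R M \<subseteq> singular_sub R M"
proof
  let ?Z = "singular_sub R M"
  have ns: "right_nonsingular R" using ss by (simp add: right_strongly_semihereditary_def)
  obtain n :: nat and s where "n \<ge> 1" and s: "\<forall>i<n. s i \<in> carrier M"
    and span: "\<forall>x\<in>carrier M. \<exists>c. (\<forall>i<n. c i \<in> carrier R) \<and> x = finsum M (\<lambda>i. smult M (c i) (s i)) {..<n}"
    by (rule fin_gen_elim[OF fg])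
  let ?V = "free_mod R {..<n}"
  interpret V: rmod R ?V by (intro rmodI free_mod_rm ringR)
  have Vc: "c i \<in> carrier R" if "c \<in> carrier ?V" for c i
    using that by (cases "i < n") (auto simp: free_mod_carrier)
  define ev where "ev c = finsum M (\<lambda>i. smult M (c i) (s i)) {..<n}" for c
  have ev_hom: "module_hom R ?V M ev"
    unfolding module_hom_def
  proof (intro conjI ballI)
    fix c assume "c \<in> carrier ?V" then show "ev c \<in> carrier M"
      unfolding ev_def using s Vc by (intro lincomb_closed) auto
  next
    fix c d assume c: "c \<in> carrier ?V" and d: "d \<in> carrier ?V"
    show "ev (c \<oplus>\<^bsub>?V\<^esub> d) = ev c \<oplus>\<^bsub>M\<^esub> ev d"
      unfolding ev_def using lc_add[of n c d s] s Vc[OF c] Vc[OF d] by simp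
  next
    fix c r assume c: "c \<in> carrier ?V" and r: "r \<in> carrier R"
    show "ev (smult ?V r c) = smult M r (ev c)"
      unfolding ev_def using lc_sm[of n c r s] s Vc[OF c] r by simp
  qed
  interpret evh: rhom R ?V M ev by (intro rhomI free_mod_rm ringR rm ev_hom)
  have ev_surj: "\<exists>c\<in>carrier ?V. ev c = y" if y: "y \<in> carrier M" for y
  proof -
    obtain c where c: "\<forall>i<n. c i \<in> carrier R" "y = finsum M (\<lambda>i. smult M (c i) (s i)) {..<n}"
      using span y by blast
    define c' where "c' = (\<lambda>i. if i < n then c i else \<zero>\<^bsub>R\<^esub>)"
    have "c' \<in> carrier ?V"
      unfolding free_mod_carrier c'_def using c
      by (auto intro: finite_subset[of _ "{..<n}"])
    moreover have "ev c' = y" unfolding ev_def c(2)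
      by (rule M.finsum_cong'[OF refl]) (use c s in \<open>auto simp: c'_def\<close>)
    ultimately show ?thesis by blast
  qed
  define L where "L = {c \<in> carrier ?V. ev c \<in> ?Z}"
  have Lsub: "submodule R ?V L" unfolding L_def by (rule evh.preimage_sub[OF Z_sub])
  interpret W: rquot R ?V L by (intro rquotI free_mod_rm ringR Lsub)
  define \<delta> where "\<delta> i = (\<lambda>j. if j = i then \<one>\<^bsub>R\<^esub> else \<zero>\<^bsub>R\<^esub>)" for i :: nat
  have \<delta>c: "\<delta> i \<in> carrier ?V" if "i < n" for i
    using that unfolding free_mod_carrier \<delta>_def by (auto intro: finite_subset[of _ "{i}"])
  have Vfg: "fin_gen R ?V"
  proof (rule V.fin_gen_intro[of n \<delta>])
    show "\<forall>i<n. \<delta> i \<in> carrier ?V" using \<delta>c by auto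
    show "\<forall>x\<in>carrier ?V. \<exists>c. (\<forall>i<n. c i \<in> carrier R) \<and> x = finsum ?V (\<lambda>i. smult ?V (c i) (\<delta> i)) {..<n}"
    proof
      fix v assume v: "v \<in> carrier ?V"
      have "finsum ?V (\<lambda>i. smult ?V (v i) (\<delta> i)) {..<n} = v"
      proof
        fix j
        have mem: "(\<lambda>i. smult ?V (v i) (\<delta> i)) \<in> {..<n} \<rightarrow> carrier ?V"
          using V.sm_closed[OF Vc[OF v] \<delta>c] by auto
        have "finsum ?V (\<lambda>i. smult ?V (v i) (\<delta> i)) {..<n} j = finsum R (\<lambda>i. smult ?V (v i) (\<delta> i) j) {..<n}"
          by (rule fm_finsum_apply[OF ringR _ mem]) simp
        also have "\<dots> = finsum R (\<lambda>i. \<delta> i j \<otimes>\<^bsub>R\<^esub> v i) {..<n}" by simp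
        finally have "finsum ?V (\<lambda>i. smult ?V (v i) (\<delta> i)) {..<n} j = finsum R (\<lambda>i. \<delta> i j \<otimes>\<^bsub>R\<^esub> v i) {..<n}" .
        also have "\<dots> = finsum R (\<lambda>i. if i = j then v i else \<zero>\<^bsub>R\<^esub>) {..<n}"
          by (rule R.finsum_cong'[OF refl]) (use v Vc in \<open>auto simp: \<delta>_def\<close>)
        also have "\<dots> = v j"
        proof (cases "j < n")
          case True then show ?thesis using v Vc by (intro R.add.finprod_singleton_swap) auto
        next
          case False
          then have "finsum R (\<lambda>i. if i = j then v i else \<zero>\<^bsub>R\<^esub>) {..<n} = finsum R (\<lambda>i. \<zero>\<^bsub>R\<^esub>) {..<n}"
            by (intro R.finsum_cong'[OF refl]) auto
          also have "\<dots> = \<zero>\<^bsub>R\<^esub>" by simp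
          finally show ?thesis using v False by (simp add: free_mod_carrier)
        qed
        finally show "finsum ?V (\<lambda>i. smult ?V (v i) (\<delta> i)) {..<n} j = v j" .
      qed
      then show "\<exists>c. (\<forall>i<n. c i \<in> carrier R) \<and> v = finsum ?V (\<lambda>i. smult ?V (c i) (\<delta> i)) {..<n}"
        using v Vc by (intro exI[of _ v]) auto
    qed
  qed
  have Wfg: "fin_gen R W.Q" by (rule W.Q_fin_gen[OF Vfg])
  have Wz: "\<zero>\<^bsub>W.Q\<^esub> = L" by (simp only: W.Q_zero W.K_coset)
  have Wns: "nonsingular R W.Q"
    unfolding nonsingular_def
  proof
    show "singular_sub R W.Q \<subseteq> {\<zero>\<^bsub>W.Q\<^esub>}"
    proof
      fix A assume A: "A \<in> singular_sub R W.Q"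
      then have Ac: "A \<in> carrier W.Q" "essential_right_ideal R (W.Qm.ann A)" using W.Qm.Z_def' by auto
      obtain c where c: "c \<in> carrier ?V" "A = L +>\<^bsub>?V\<^esub> c" using Ac(1) by (auto simp: W.Q_carrier)
      have "smult M r (ev c) \<in> ?Z" if r: "r \<in> W.Qm.ann A" for r
      proof -
        have rc: "r \<in> carrier R" "smult W.Q r A = \<zero>\<^bsub>W.Q\<^esub>" using r by (auto simp: W.Qm.ann_def)
        have e1: "smult W.Q r A = L +>\<^bsub>?V\<^esub> smult ?V r c" unfolding c(2) by (rule W.Q_sm[OF c(1) rc(1)])
        have "L +>\<^bsub>?V\<^esub> smult ?V r c = L" using rc(2) unfolding e1 Wz .
        then have "smult ?V r c \<in> L" using W.coset_zero_iff V.sm_closed[OF rc(1) c(1)] by blast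
        then show ?thesis using evh.h_sm[OF c(1) rc(1)] by (simp add: L_def)
      qed
      then have "ev c \<in> ?Z" using Z2[OF ns evh.h_closed[OF c(1)] Ac(2)] by blast
      then have "c \<in> L" using c by (simp add: L_def)
      then have "A = L" using c W.coset_zero_iff by blast
      then show "A \<in> {\<zero>\<^bsub>W.Q\<^esub>}" by (simp add: Wz)
    qed
    show "{\<zero>\<^bsub>W.Q\<^esub>} \<subseteq> singular_sub R W.Q" using W.Qm.Z_sub by (simp add: submodule_def)
  qed
  have Wproj: "projective R W.Q"
    using ss W.Q_rm Wfg Wns unfolding right_strongly_semihereditary_def by blast
  then obtain f where f: "module_hom R W.Q (free_mod R (carrier W.Q)) f" "inj_on f (carrier W.Q)"
    unfolding projective_def by blast
  let ?F = "free_mod R (carrier W.Q)"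
  interpret fh: rhom R W.Q ?F f by (intro rhomI W.Q_rm free_mod_rm ringR f(1))
  define rep where "rep y = (SOME c. c \<in> carrier ?V \<and> ev c = y)" for y
  have rep: "rep y \<in> carrier ?V \<and> ev (rep y) = y" if "y \<in> carrier M" for y
  proof -
    have "\<exists>c. c \<in> carrier ?V \<and> ev c = y" using ev_surj[OF that] by blast
    then show ?thesis unfolding rep_def by (rule someI_ex)
  qed
  have same: "L +>\<^bsub>?V\<^esub> c = L +>\<^bsub>?V\<^esub> d" if "c \<in> carrier ?V" "d \<in> carrier ?V" "ev c = ev d" for c d
  proof -
    have "ev (c \<ominus>\<^bsub>?V\<^esub> d) = \<zero>\<^bsub>M\<^esub>" using evh.h_minus[OF that(1,2)] that evh.h_closed
      by (simp add: M.minus_eq M.r_neg)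
    then have "c \<ominus>\<^bsub>?V\<^esub> d \<in> L" using that Z_sub by (simp add: L_def submodule_def)
    then show ?thesis using W.coset_eq that by blast
  qed
  define \<psi> where "\<psi> y = L +>\<^bsub>?V\<^esub> rep y" for y
  have \<psi>_hom: "module_hom R M W.Q \<psi>"
    unfolding module_hom_def
  proof (intro conjI ballI)
    fix x assume "x \<in> carrier M" then show "\<psi> x \<in> carrier W.Q" using rep by (simp add: \<psi>_def)
  next
    fix x y assume x: "x \<in> carrier M" and y: "y \<in> carrier M"
    have "\<psi> (x \<oplus>\<^bsub>M\<^esub> y) = L +>\<^bsub>?V\<^esub> (rep x \<oplus>\<^bsub>?V\<^esub> rep y)"
      unfolding \<psi>_def by (rule same) (use rep[OF x] rep[OF y] rep[OF M.a_closed[OF x y]] evh.h_add V.M.a_closed in \<open>auto simp del: free_mod_simps\<close>)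
    also have "\<dots> = \<psi> x \<oplus>\<^bsub>W.Q\<^esub> \<psi> y" unfolding \<psi>_def using rep[OF x] rep[OF y] W.Q_add by simp
    finally show "\<psi> (x \<oplus>\<^bsub>M\<^esub> y) = \<psi> x \<oplus>\<^bsub>W.Q\<^esub> \<psi> y" .
  next
    fix x r assume x: "x \<in> carrier M" and r: "r \<in> carrier R"
    have "\<psi> (smult M r x) = L +>\<^bsub>?V\<^esub> (smult ?V r (rep x))"
      unfolding \<psi>_def by (rule same) (use rep[OF x] rep[OF sm_closed[OF r x]] evh.h_sm V.sm_closed r in \<open>auto simp del: free_mod_simps\<close>)
    also have "\<dots> = smult W.Q r (\<psi> x)" unfolding \<psi>_def using rep[OF x] W.Q_sm r by simp
    finally show "\<psi> (smult M r x) = smult W.Q r (\<psi> x)" .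
  qed
  have coord: "module_hom R ?F (RR R) (\<lambda>\<phi>. \<phi> p)" for p
    unfolding module_hom_def
    by (auto simp: free_mod_carrier) (metis R.zero_closed)
  fix x assume xt: "x \<in> torsB R M"
  have xc: "x \<in> carrier M" using xt unfolding torsB_fg[OF fg baer] Cset_def by auto
  have kill: "\<And>h. module_hom R M (RR R) h \<Longrightarrow> h x = \<zero>\<^bsub>R\<^esub>"
    using xt unfolding torsB_fg[OF fg baer] Cset_zero by auto
  have "\<psi> x = \<zero>\<^bsub>W.Q\<^esub>"
  proof (rule ccontr)
    assume ne: "\<psi> x \<noteq> \<zero>\<^bsub>W.Q\<^esub>"
    have "f (\<psi> x) \<noteq> f \<zero>\<^bsub>W.Q\<^esub>"
      using f(2) ne \<psi>_hom xc W.Qm.M.zero_closed unfolding module_hom_def inj_on_def by blast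
    then have "f (\<psi> x) \<noteq> (\<lambda>j. \<zero>\<^bsub>R\<^esub>)" using fh.h_zero by simp
    then obtain p where p: "f (\<psi> x) p \<noteq> \<zero>\<^bsub>R\<^esub>" by auto
    have "module_hom R M (RR R) ((\<lambda>\<phi>. \<phi> p) \<circ> (f \<circ> \<psi>))"
      by (rule module_hom_comp[OF module_hom_comp[OF \<psi>_hom f(1)] coord])
    then have "((\<lambda>\<phi>. \<phi> p) \<circ> (f \<circ> \<psi>)) x = \<zero>\<^bsub>R\<^esub>" by (rule kill)
    then show False using p by simp
  qed
  then have "L +>\<^bsub>?V\<^esub> rep x = L" unfolding \<psi>_def Wz .
  then have "rep x \<in> L" using W.coset_zero_iff rep[OF xc] by blast
  then show "x \<in> ?Z" using rep[OF xc] by (simp add: L_def)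
qed

end

context rmod begin

lemma part2:
  assumes ss: "right_strongly_semihereditary R" and fg: "fin_gen R M"
    and baer: "\<forall>n\<ge>1. baer_ring (matring R n)"
  shows "torsB R M = torsT R M"
    and "\<exists>P Q. submodule R M P \<and> submodule R M Q \<and> P \<inter> Q = {\<zero>\<^bsub>M\<^esub>} \<and>
                (\<forall>x\<in>carrier M. \<exists>p\<in>P. \<exists>q\<in>Q. x = p \<oplus>\<^bsub>M\<^esub> q) \<and>
                fin_gen R (M\<lparr>carrier := P\<rparr>) \<and> projective R (M\<lparr>carrier := P\<rparr>) \<and>
                singular R (M\<lparr>carrier := Q\<rparr>)"
proof -
  have ns: "right_nonsingular R" using ss by (simp add: right_strongly_semihereditary_def)
  have BZ: "torsB R M = singular_sub R M"
    using torsB_Z[OF ss fg baer] Z_torsB[OF ns fg baer] by blast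
  show "torsB R M = torsT R M" using BZ torsT_eq[OF ns] by simp
  obtain n t g where sp: "splitloc R M (Cset R M {\<zero>\<^bsub>M\<^esub>}) n t g"
    using split_exists[OF fg zero_sub baer] by blast
  interpret S: splitloc R M "Cset R M {\<zero>\<^bsub>M\<^esub>}" n t g by (rule sp)
  have C: "Cset R M {\<zero>\<^bsub>M\<^esub>} = singular_sub R M" using torsB_fg[OF fg baer] BZ by simp
  have sing: "singular R (M\<lparr>carrier := Cset R M {\<zero>\<^bsub>M\<^esub>}\<rparr>)"
    unfolding singular_def singular_sub_def C using Z_def' by (auto simp: ann_def)
  show "\<exists>P Q. submodule R M P \<and> submodule R M Q \<and> P \<inter> Q = {\<zero>\<^bsub>M\<^esub>} \<and>
                (\<forall>x\<in>carrier M. \<exists>p\<in>P. \<exists>q\<in>Q. x = p \<oplus>\<^bsub>M\<^esub> q) \<and>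
                fin_gen R (M\<lparr>carrier := P\<rparr>) \<and> projective R (M\<lparr>carrier := P\<rparr>) \<and>
                singular R (M\<lparr>carrier := Q\<rparr>)"
  proof (intro exI conjI)
    show "submodule R M S.D" by (rule S.D_sub)
    show "submodule R M (Cset R M {\<zero>\<^bsub>M\<^esub>})" by (rule Cset_sub)
    show "S.D \<inter> Cset R M {\<zero>\<^bsub>M\<^esub>} = {\<zero>\<^bsub>M\<^esub>}" using S.CD_int by blast
    show "\<forall>x\<in>carrier M. \<exists>p\<in>S.D. \<exists>q\<in>Cset R M {\<zero>\<^bsub>M\<^esub>}. x = p \<oplus>\<^bsub>M\<^esub> q"
    proof
      fix x assume x: "x \<in> carrier M"
      then obtain c d where cd: "c \<in> Cset R M {\<zero>\<^bsub>M\<^esub>}" "d \<in> S.D" "x = c \<oplus>\<^bsub>M\<^esub> d" using S.CD_sum by blast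
      have "c \<in> carrier M" "d \<in> carrier M" using cd S.C_carr S.D_carr by auto
      then have "x = d \<oplus>\<^bsub>M\<^esub> c" using cd(3) M.a_comm by simp
      then show "\<exists>p\<in>S.D. \<exists>q\<in>Cset R M {\<zero>\<^bsub>M\<^esub>}. x = p \<oplus>\<^bsub>M\<^esub> q" using cd by blast
    qed
    show "fin_gen R (M\<lparr>carrier := S.D\<rparr>)" using S.D_results by simp
    show "projective R (M\<lparr>carrier := S.D\<rparr>)" using S.D_results by simp
    show "singular R (M\<lparr>carrier := Cset R M {\<zero>\<^bsub>M\<^esub>}\<rparr>)" by (rule sing)
  qed
qed

end

theorem mainTheorem4:
  fixes R :: "'a ring" and M :: "('a, 'm) module" and K :: "'m set"
  assumes "ring R"
    and "right_semihereditary R"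
    and "\<forall>n\<ge>1. baer_ring (matring R n)"
    and "right_module R M" and "fin_gen R M" and "submodule R M K"
  shows "(fin_gen R (quot_mod R M (clB R M K)) \<and> projective R (quot_mod R M (clB R M K)) \<and>
          direct_summand R M (clB R M K) \<and>
          direct_summand R M (torsB R M) \<and>
          fin_gen R (quot_mod R M (torsB R M)) \<and> projective R (quot_mod R M (torsB R M)))
       \<and> (right_strongly_semihereditary R \<longrightarrow>
          clT R M K = clB R M K \<and> direct_summand R M (clT R M K) \<and>
          (\<forall>N :: ('a, 'm) module. right_module R N \<and> fin_gen R N \<longrightarrow> torsB R N = torsT R N) \<and>
          (\<forall>N :: ('a, 'm) module. right_module R N \<and> fin_gen R N \<longrightarrow>
             (\<exists>P Q. submodule R N P \<and> submodule R N Q \<and> P \<inter> Q = {\<zero>\<^bsub>N\<^esub>} \<and>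
                (\<forall>x\<in>carrier N. \<exists>p\<in>P. \<exists>q\<in>Q. x = p \<oplus>\<^bsub>N\<^esub> q) \<and>
                fin_gen R (N\<lparr>carrier := P\<rparr>) \<and> projective R (N\<lparr>carrier := P\<rparr>) \<and>
                singular R (N\<lparr>carrier := Q\<rparr>))))"
proof -
  note baer = assms(3) and fg = assms(5)
  interpret Q: rquot R M K by (intro rquotI assms(4,6))
  have clB: "clB R M K = Cset R M K" by (rule Q.clB_eq[OF fg baer])
  obtain n t g where sp: "splitloc R M (Cset R M K) n t g"
    using Q.split_exists[OF fg assms(6) baer] by blast
  obtain n0 t0 g0 where sp0: "splitloc R M (Cset R M {\<zero>\<^bsub>M\<^esub>}) n0 t0 g0"
    using Q.split_exists[OF fg Q.zero_sub baer] by blast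
  have tB: "torsB R M = Cset R M {\<zero>\<^bsub>M\<^esub>}" by (rule Q.torsB_fg[OF fg baer])
  have part1: "fin_gen R (quot_mod R M (clB R M K)) \<and> projective R (quot_mod R M (clB R M K)) \<and>
          direct_summand R M (clB R M K) \<and>
          direct_summand R M (torsB R M) \<and>
          fin_gen R (quot_mod R M (torsB R M)) \<and> projective R (quot_mod R M (torsB R M))"
    unfolding clB tB using splitloc.quot_results[OF sp] splitloc.C_summand[OF sp]
      splitloc.quot_results[OF sp0] splitloc.C_summand[OF sp0] by simp
  have part2: "clT R M K = clB R M K \<and> direct_summand R M (clT R M K) \<and>
          (\<forall>N :: ('a, 'm) module. right_module R N \<and> fin_gen R N \<longrightarrow> torsB R N = torsT R N) \<and>
          (\<forall>N :: ('a, 'm) module. right_module R N \<and> fin_gen R N \<longrightarrow>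
             (\<exists>P Q. submodule R N P \<and> submodule R N Q \<and> P \<inter> Q = {\<zero>\<^bsub>N\<^esub>} \<and>
                (\<forall>x\<in>carrier N. \<exists>p\<in>P. \<exists>q\<in>Q. x = p \<oplus>\<^bsub>N\<^esub> q) \<and>
                fin_gen R (N\<lparr>carrier := P\<rparr>) \<and> projective R (N\<lparr>carrier := P\<rparr>) \<and>
                singular R (N\<lparr>carrier := Q\<rparr>)))"
    if ss: "right_strongly_semihereditary R"
  proof -
    have tQ: "torsB R Q.Q = torsT R Q.Q" by (rule Q.Qm.part2(1)[OF ss Q.Q_fin_gen[OF fg] baer])
    have clT: "clT R M K = clB R M K" unfolding clT_def clB_def tQ ..
    show ?thesis
    proof (intro conjI allI impI)
      show "clT R M K = clB R M K" by (rule clT)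
      show "direct_summand R M (clT R M K)" using clT part1 by simp
    next
      fix N :: "('a, 'm) module" assume N: "right_module R N \<and> fin_gen R N"
      interpret N: rmod R N by (intro rmodI conjunct1[OF N])
      show "torsB R N = torsT R N" by (rule N.part2(1)[OF ss conjunct2[OF N] baer])
    next
      fix N :: "('a, 'm) module" assume N: "right_module R N \<and> fin_gen R N"
      interpret N: rmod R N by (intro rmodI conjunct1[OF N])
      show "\<exists>P Q. submodule R N P \<and> submodule R N Q \<and> P \<inter> Q = {\<zero>\<^bsub>N\<^esub>} \<and>
                (\<forall>x\<in>carrier N. \<exists>p\<in>P. \<exists>q\<in>Q. x = p \<oplus>\<^bsub>N\<^esub> q) \<and>
                fin_gen R (N\<lparr>carrier := P\<rparr>) \<and> projective R (N\<lparr>carrier := P\<rparr>) \<and>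
                singular R (N\<lparr>carrier := Q\<rparr>)"
        by (rule N.part2(2)[OF ss conjunct2[OF N] baer])
    qed
  qed
  show ?thesis using part1 part2 by blast
qed

end
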